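(* Let $\mathcal{T}=[0,T_{max}]$, $\mathcal{T}_d,\mathcal{T}_a\subseteq\mathcal{T}$ compact, $\mathcal{X}=[X_{min},X_{max}]$ with $0\le X_{min}<X_{max}$, $m$ a probability measure on $\mathcal{X}\times\mathcal{T}_a$, $G>0$, and $\alpha,\beta,\gamma>0$. Let $V:\mathbb{R}^+\to\mathbb{R}^+$ be a strictly decreasing Lipschitz continuous speed function with $V_{min}\le V\le V_{max}$ for constants $V_{max}>V_{min}>0$. Assume that for all $F\in\mathcal{P}_{m,G}$, $t_d\in\mathcal{T}_d$, $x\in\mathcal{X}$ one has $x+z_F(t_d)\le z_F(T_{max})$, so that the travel time below is well defined. Then the cost function $$J(t_d;x,t_a;F)=\alpha T_F(t_d,x)+\beta\big(t_a-t_d-T_F(t_d,x)\big)_++\gamma\big(t_d+T_F(t_d,x)-t_a\big)_+$$ is jointly continuous on $\mathcal{T}_d\times\mathcal{X}\times\mathcal{T}_a\times\mathcal{P}_{m,G}$ (with $\mathcal{P}_{m,G}$ carrying the weak convergence topology), and for each fixed $F\in\mathcal{P}_{m,G}$ it is Lipschitz continuous in $(t_d,x,t_a)$ on $\mathcal{T}_d\times\mathcal{X}\times\mathcal{T}_a$.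
   Context: $(y)_+=\max\{y,0\}$. $\lambda_2$ denotes Lebesgue measure on $\mathbb{R}^2$. $\mathcal{P}_{m,G}$ is the set of all Borel probability measures $F$ on $\mathcal{T}_d\times\mathcal{X}$ such that (i) $F(B)\le G\,\lambda_2(B)$ for every Borel $B\subseteq\mathcal{T}_d\times\mathcal{X}$, and (ii) $F(\mathcal{T}_d\times B)=m(B\times\mathcal{T}_a)$ for every Borel $B\subseteq\mathcal{X}$. For $z\in\mathcal{C}(\mathcal{T})$, $S_t(z):=\{(\tau,\xi)\,:\,\tau\in[0,t]\cap\mathcal{T}_d,\ \xi\in(z(t)-z(\tau),\infty)\cap\mathcal{X}\}$. For $F\in\mathcal{P}_{m,G}$, $z_F$ (the characteristic travel distance) is the unique continuous function on $\mathcal{T}$ with $z_F(t)=\int_0^t V\big(F(S_s(z_F))\big)\,ds$; it is strictly increasing, and $T_F(t_d,x):=z_F^{-1}\big(x+z_F(t_d)\big)-t_d$ is the travel time of a trip of length $x$ departing at $t_d$. *)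

theory Defs
  imports "HOL-Probability.Probability"
begin

text \<open>For F: first component = departure time tau, second = trip length xi.
  For m: first component = trip length x, second = desired arrival time t_a.\<close>

definition S_set :: "real set \<Rightarrow> real set \<Rightarrow> (real \<Rightarrow> real) \<Rightarrow> real \<Rightarrow> (real \<times> real) set" where
  "S_set Td X z t = {(tau, xi). tau \<in> {0..t} \<inter> Td \<and> xi \<in> {z t - z tau<..} \<inter> X}"

definition P_mG :: "real set \<Rightarrow> real set \<Rightarrow> real set \<Rightarrow> (real \<times> real) measure \<Rightarrow> real
    \<Rightarrow> (real \<times> real) measure set" where
  "P_mG Td X Ta m G = {F. sets F = sets borel \<and> prob_space F \<and> emeasure F (Td \<times> X) = 1
      \<and> (\<forall>B \<in> sets borel. B \<subseteq> Td \<times> X \<longrightarrow> emeasure F B \<le> ennreal G * emeasure lborel B)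
      \<and> (\<forall>B \<in> sets borel. B \<subseteq> X \<longrightarrow> emeasure F (Td \<times> B) = emeasure m (B \<times> Ta))}"

text \<open>Characteristic travel distance: the unique continuous function on [0,Tmax] solving the
  integral equation (normalised to 0 outside [0,Tmax] so that THE picks a single function).\<close>
definition zF :: "real \<Rightarrow> real set \<Rightarrow> real set \<Rightarrow> (real \<Rightarrow> real) \<Rightarrow> (real \<times> real) measure
    \<Rightarrow> real \<Rightarrow> real" where
  "zF Tmax Td X V F = (THE z. continuous_on {0..Tmax} z
      \<and> (\<forall>t \<in> {0..Tmax}. z t = integral {0..t} (\<lambda>s. V (measure F (S_set Td X z s))))
      \<and> (\<forall>t. t \<notin> {0..Tmax} \<longrightarrow> z t = 0))"

definition TF :: "real \<Rightarrow> real set \<Rightarrow> real set \<Rightarrow> (real \<Rightarrow> real) \<Rightarrow> (real \<times> real) measure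
    \<Rightarrow> real \<Rightarrow> real \<Rightarrow> real" where
  "TF Tmax Td X V F td x =
     the_inv_into {0..Tmax} (zF Tmax Td X V F) (x + zF Tmax Td X V F td) - td"

definition pos_part :: "real \<Rightarrow> real" where
  "pos_part y = max y 0"

definition Jcost :: "real \<Rightarrow> real \<Rightarrow> real \<Rightarrow> real \<Rightarrow> real set \<Rightarrow> real set \<Rightarrow> (real \<Rightarrow> real)
    \<Rightarrow> real \<Rightarrow> real \<Rightarrow> real \<Rightarrow> (real \<times> real) measure \<Rightarrow> real" where
  "Jcost \<alpha> \<beta> \<gamma> Tmax Td X V td x ta F =
     \<alpha> * TF Tmax Td X V F td x
     + \<beta> * pos_part (ta - td - TF Tmax Td X V F td x)
     + \<gamma> * pos_part (td + TF Tmax Td X V F td x - ta)"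

definition weak_conv2 :: "(nat \<Rightarrow> (real \<times> real) measure) \<Rightarrow> (real \<times> real) measure \<Rightarrow> bool" where
  "weak_conv2 Fs F \<longleftrightarrow> (\<forall>f :: real \<times> real \<Rightarrow> real. continuous_on UNIV f \<and> bounded (range f) \<longrightarrow>
      (\<lambda>n. integral\<^sup>L (Fs n) f) \<longlonglongrightarrow> integral\<^sup>L F f)"

end

theory Submission
  imports Defs
begin


lemma strip_emeasure:
  fixes g :: "real \<Rightarrow> real"
  assumes g: "continuous_on UNIV g" and ab: "a \<le> b" and h: "0 \<le> h"
  shows "emeasure lborel {p::real\<times>real. fst p \<in> {a..b} \<and> g (fst p) \<le> snd p \<and> snd p \<le> g (fst p) + h}
     = ennreal ((b-a)*h)"
proof -
  let ?A = "{p::real\<times>real. fst p \<in> {a..b} \<and> g (fst p) \<le> snd p \<and> snd p \<le> g (fst p) + h}"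
  have "?A = ({a..b} \<times> UNIV) \<inter> {p. g (fst p) \<le> snd p} \<inter> {p. snd p \<le> g (fst p) + h}"
    by auto
  moreover have "closed \<dots>"
    by (intro closed_Int closed_Times closed_Collect_le continuous_intros
        continuous_on_compose2[OF g]) auto
  ultimately have cl: "closed ?A" by simp
  have A: "?A \<in> sets (lborel \<Otimes>\<^sub>M lborel)"
    unfolding lborel_prod using cl by (simp add: borel_closed)
  have "emeasure lborel ?A = emeasure (lborel \<Otimes>\<^sub>M lborel) ?A" by (simp add: lborel_prod)
  also have "\<dots> = (\<integral>\<^sup>+x. emeasure lborel (Pair x -` ?A) \<partial>lborel)"
    by (rule lborel.emeasure_pair_measure_alt[OF A])
  also have "\<dots> = (\<integral>\<^sup>+x. ennreal h * indicator {a..b} x \<partial>lborel)"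
  proof (intro nn_integral_cong)
    fix x :: real
    have "Pair x -` ?A = (if x \<in> {a..b} then {g x..g x + h} else {})" by auto
    then show "emeasure lborel (Pair x -` ?A) = ennreal h * indicator {a..b} x"
      using h by (simp add: indicator_def)
  qed
  also have "\<dots> = ennreal h * ennreal (b - a)"
    using ab by (subst nn_integral_cmult_indicator) auto
  also have "\<dots> = ennreal ((b-a)*h)" using ab h by (simp add: ennreal_mult' mult.commute)
  finally show ?thesis .
qed

lemma rect_emeasure:
  assumes "a \<le> b" "c \<le> d"
  shows "emeasure lborel ({a..b} \<times> {c..d} :: (real\<times>real) set) = ennreal ((b-a)*(d-c))"
proof -
  have "{a..b} \<times> {c..d} = {p::real\<times>real. fst p \<in> {a..b} \<and> (\<lambda>_. c) (fst p) \<le> snd p \<and> snd p \<le> (\<lambda>_. c) (fst p) + (d - c)}"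
    by auto
  then show ?thesis using strip_emeasure[of "\<lambda>_. c" a b "d-c"] assms by simp
qed

definition clampT :: "real \<Rightarrow> real \<Rightarrow> real" where
  "clampT T t = max 0 (min T t)"

lemma clampT_cont: "continuous_on UNIV (clampT T)"
  unfolding clampT_def by (intro continuous_intros)

lemma clampT_id: "0 \<le> T \<Longrightarrow> t \<in> {0..T} \<Longrightarrow> clampT T t = t"
  unfolding clampT_def by auto

lemma clampT_in: "0 \<le> T \<Longrightarrow> clampT T t \<in> {0..T}"
  unfolding clampT_def by auto

lemma cont_clampT:
  assumes "continuous_on {0..T} z" "0 \<le> T"
  shows "continuous_on UNIV (\<lambda>t. z (clampT T t))"
  by (rule continuous_on_compose2[OF assms(1) clampT_cont]) (use clampT_in assms(2) in auto)

definition good :: "real set \<Rightarrow> real \<Rightarrow> real \<Rightarrow> real \<Rightarrow> (real \<times> real) measure \<Rightarrow> bool" where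
  "good Td Xmin Xmax G F \<longleftrightarrow> sets F = sets borel \<and> prob_space F \<and> emeasure F (Td \<times> {Xmin..Xmax}) = 1
      \<and> (\<forall>B \<in> sets borel. B \<subseteq> Td \<times> {Xmin..Xmax} \<longrightarrow> emeasure F B \<le> ennreal G * emeasure lborel B)"

locale zctx =
  fixes Tmax :: real and Td :: "real set" and Xmin Xmax G :: real
    and V :: "real \<Rightarrow> real" and Vmin Vmax LV :: real
  assumes Tpos: "0 < Tmax" and Tdc: "compact Td" and TdT: "Td \<subseteq> {0..Tmax}"
    and X0: "0 \<le> Xmin" and Xlt: "Xmin < Xmax" and Gpos: "0 < G"
    and Vlip: "LV-lipschitz_on {0..} V" and Vmin_pos: "0 < Vmin"
    and Vbnd: "\<And>u. 0 \<le> u \<Longrightarrow> Vmin \<le> V u \<and> V u \<le> Vmax"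
begin

lemma S_set_alt:
  assumes "s \<in> {0..Tmax}"
  shows "S_set Td {Xmin..Xmax} z s = ((Td \<inter> {0..s}) \<times> {Xmin..Xmax}) \<inter> {p. z s - z (clampT Tmax (fst p)) < snd p}"
  using TdT Tpos by (auto simp: S_set_def clampT_id subset_iff)

lemma S_borel:
  assumes z: "continuous_on {0..Tmax} z" and s: "s \<in> {0..Tmax}"
  shows "S_set Td {Xmin..Xmax} z s \<in> sets borel"
proof -
  have c: "continuous_on UNIV (\<lambda>t. z (clampT Tmax t))" using cont_clampT[OF z] Tpos by simp
  have "closed ((Td \<inter> {0..s}) \<times> {Xmin..Xmax})"
    using Tdc by (intro closed_Times closed_Int compact_imp_closed) auto
  moreover have "open {p::real\<times>real. z s - z (clampT Tmax (fst p)) < snd p}"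
    by (intro open_Collect_less continuous_intros continuous_on_compose2[OF c]) auto
  ultimately show ?thesis unfolding S_set_alt[OF s] by (intro sets.Int borel_closed borel_open)
qed

lemma S_sub: "S_set Td {Xmin..Xmax} z s \<subseteq> Td \<times> {Xmin..Xmax}"
  by (auto simp: S_set_def)

lemma good_measure_le:
  assumes F: "good Td Xmin Xmax G F" and B: "B \<in> sets borel" "B \<subseteq> Td \<times> {Xmin..Xmax}"
    and C: "C \<in> sets borel" "B \<subseteq> C" "emeasure lborel C \<le> ennreal r" and r: "0 \<le> r"
  shows "measure F B \<le> G * r"
proof -
  interpret prob_space F using F by (simp add: good_def)
  have "emeasure F B \<le> ennreal G * emeasure lborel B" using F B by (auto simp: good_def)
  also have "\<dots> \<le> ennreal G * emeasure lborel C"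
    using C B by (intro mult_left_mono emeasure_mono) auto
  also have "\<dots> \<le> ennreal G * ennreal r" using C by (intro mult_left_mono) auto
  also have "\<dots> = ennreal (G * r)" using Gpos r by (simp add: ennreal_mult)
  finally have "ennreal (measure F B) \<le> ennreal (G * r)" by (simp add: emeasure_eq_measure)
  then show ?thesis using Gpos r by (simp add: ennreal_le_iff)
qed

lemma S_diff_le:
  assumes F: "good Td Xmin Xmax G F" and z1: "continuous_on {0..Tmax} z1" and z2: "continuous_on {0..Tmax} z2"
    and t1: "t1 \<in> {0..Tmax}" and t2: "t2 \<in> {0..Tmax}" and d: "0 \<le> d"
    and hd: "\<And>\<tau>. \<tau> \<in> {0..min t1 t2} \<Longrightarrow> \<bar>(z1 t1 - z1 \<tau>) - (z2 t2 - z2 \<tau>)\<bar> \<le> d"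
  shows "measure F (S_set Td {Xmin..Xmax} z1 t1) - measure F (S_set Td {Xmin..Xmax} z2 t2)
           \<le> G * (\<bar>t1 - t2\<bar> * (Xmax - Xmin) + Tmax * d)"
proof -
  interpret prob_space F using F by (simp add: good_def)
  have sF: "sets F = sets borel" using F by (simp add: good_def)
  define S1 where "S1 = S_set Td {Xmin..Xmax} z1 t1"
  define S2 where "S2 = S_set Td {Xmin..Xmax} z2 t2"
  define g where "g = (\<lambda>\<tau>. z1 t1 - z1 (clampT Tmax \<tau>))"
  have gc: "continuous_on UNIV g" unfolding g_def
    using cont_clampT[OF z1] Tpos by (intro continuous_intros) auto
  have S1b: "S1 \<in> sets borel" and S2b: "S2 \<in> sets borel"
    unfolding S1_def S2_def using S_borel z1 z2 t1 t2 by auto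
  define R where "R = (if t2 \<le> t1 then {t2..t1} \<times> {Xmin..Xmax} else {})"
  define St where "St = {p::real\<times>real. fst p \<in> {0..Tmax} \<and> g (fst p) \<le> snd p \<and> snd p \<le> g (fst p) + d}"
  have Rm: "emeasure lborel R \<le> ennreal (\<bar>t1 - t2\<bar> * (Xmax - Xmin))"
    using rect_emeasure[of t2 t1 Xmin Xmax] Xlt by (auto simp: R_def)
  have Stm: "emeasure lborel St = ennreal (Tmax * d)"
    unfolding St_def using strip_emeasure[OF gc, of 0 Tmax d] Tpos d by simp
  have Rb: "R \<in> sets borel" unfolding R_def by (auto intro!: borel_closed closed_Times)
  have Stb: "St \<in> sets borel"
  proof -
    have "St = ({0..Tmax} \<times> UNIV) \<inter> {p. g (fst p) \<le> snd p} \<inter> {p. snd p \<le> g (fst p) + d}"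
      unfolding St_def by auto
    moreover have "closed \<dots>"
      by (intro closed_Int closed_Times closed_Collect_le continuous_intros
        continuous_on_compose2[OF gc]) auto
    ultimately show ?thesis by (simp add: borel_closed)
  qed
  have sub: "S1 - S2 \<subseteq> R \<union> St"
  proof
    fix p assume p: "p \<in> S1 - S2"
    obtain \<tau> \<xi> where pe: "p = (\<tau>, \<xi>)" by (cases p)
    have tau: "\<tau> \<in> Td" "0 \<le> \<tau>" "\<tau> \<le> t1" and xi: "\<xi> \<in> {Xmin..Xmax}" "z1 t1 - z1 \<tau> < \<xi>"
      using p pe by (auto simp: S1_def S_set_def)
    have tauT: "\<tau> \<in> {0..Tmax}" using tau TdT by auto
    show "p \<in> R \<union> St"
    proof (cases "t2 < \<tau>")
      case True then show ?thesis using tau xi pe by (auto simp: R_def)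
    next
      case False
      then have "\<not> (z2 t2 - z2 \<tau> < \<xi>)" using p pe tau xi by (auto simp: S2_def S_set_def)
      moreover have "\<bar>(z1 t1 - z1 \<tau>) - (z2 t2 - z2 \<tau>)\<bar> \<le> d" using hd False tau by auto
      ultimately show ?thesis using xi tauT pe clampT_id[of Tmax \<tau>] Tpos
        by (auto simp: St_def g_def)
    qed
  qed
  have "emeasure lborel (R \<union> St) \<le> emeasure lborel R + emeasure lborel St"
    using Rb Stb by (intro emeasure_subadditive) auto
  also have "\<dots> \<le> ennreal (\<bar>t1 - t2\<bar> * (Xmax - Xmin)) + ennreal (Tmax * d)"
    using Rm Stm by (intro add_mono) auto
  also have "\<dots> = ennreal (\<bar>t1 - t2\<bar> * (Xmax - Xmin) + Tmax * d)"
    using Xlt Tpos d by (intro ennreal_plus[symmetric]) auto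
  finally have le: "emeasure lborel (R \<union> St) \<le> ennreal (\<bar>t1 - t2\<bar> * (Xmax - Xmin) + Tmax * d)" .
  have "measure F (S1 - S2) \<le> G * (\<bar>t1 - t2\<bar> * (Xmax - Xmin) + Tmax * d)"
    using S1b S2b Rb Stb sub le Xlt Tpos d S_sub[of z1 t1]
    by (intro good_measure_le[OF F]) (auto simp: S1_def)
  moreover have "measure F S1 - measure F S2 \<le> measure F (S1 - S2)"
  proof -
    have "measure F S1 \<le> measure F ((S1 - S2) \<union> S2)"
      using S1b S2b sF by (intro finite_measure_mono) auto
    also have "\<dots> = measure F (S1 - S2) + measure F S2"
      using S1b S2b sF by (intro finite_measure_Union) auto
    finally show ?thesis by simp
  qed
  ultimately show ?thesis unfolding S1_def S2_def by simp
qed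

definition Phi :: "(real \<times> real) measure \<Rightarrow> (real \<Rightarrow> real) \<Rightarrow> real \<Rightarrow> real" where
  "Phi F z s = V (measure F (S_set Td {Xmin..Xmax} z s))"

lemma LV_nonneg: "0 \<le> LV" using Vlip lipschitz_on_nonneg by blast

lemma Phi_bnd: "Vmin \<le> Phi F z s" "Phi F z s \<le> Vmax"
  using Vbnd[of "measure F (S_set Td {Xmin..Xmax} z s)"] by (auto simp: Phi_def)

lemma Vmin_le_Vmax: "Vmin \<le> Vmax" using Vbnd[of 0] by auto

lemma V_diff: "0 \<le> a \<Longrightarrow> 0 \<le> b \<Longrightarrow> \<bar>V a - V b\<bar> \<le> LV * \<bar>a - b\<bar>"
  using lipschitz_onD[OF Vlip, of a b] by (auto simp: dist_real_def)

lemma S_cong: "(\<And>\<tau>. \<tau> \<in> {0..s} \<Longrightarrow> z1 \<tau> = z2 \<tau>) \<Longrightarrow> S_set Td {Xmin..Xmax} z1 s = S_set Td {Xmin..Xmax} z2 s"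
proof -
  assume h: "\<And>\<tau>. \<tau> \<in> {0..s} \<Longrightarrow> z1 \<tau> = z2 \<tau>"
  show ?thesis
  proof (cases "0 \<le> s")
    case True
    then show ?thesis using h[of s] h unfolding S_set_def by auto
  next
    case False then show ?thesis unfolding S_set_def by auto
  qed
qed

lemma Phi_cong: "(\<And>\<tau>. \<tau> \<in> {0..s} \<Longrightarrow> z1 \<tau> = z2 \<tau>) \<Longrightarrow> Phi F z1 s = Phi F z2 s"
  unfolding Phi_def using S_cong by metis

lemma measure_diff_abs:
  assumes F: "good Td Xmin Xmax G F" and z1: "continuous_on {0..Tmax} z1" and z2: "continuous_on {0..Tmax} z2"
    and t1: "t1 \<in> {0..Tmax}" and t2: "t2 \<in> {0..Tmax}" and d: "0 \<le> d"
    and hd: "\<And>\<tau>. \<tau> \<in> {0..min t1 t2} \<Longrightarrow> \<bar>(z1 t1 - z1 \<tau>) - (z2 t2 - z2 \<tau>)\<bar> \<le> d"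
  shows "\<bar>measure F (S_set Td {Xmin..Xmax} z1 t1) - measure F (S_set Td {Xmin..Xmax} z2 t2)\<bar>
           \<le> G * (\<bar>t1 - t2\<bar> * (Xmax - Xmin) + Tmax * d)"
proof -
  have a: "measure F (S_set Td {Xmin..Xmax} z1 t1) - measure F (S_set Td {Xmin..Xmax} z2 t2)
           \<le> G * (\<bar>t1 - t2\<bar> * (Xmax - Xmin) + Tmax * d)"
    by (rule S_diff_le[OF F z1 z2 t1 t2 d hd])
  have "measure F (S_set Td {Xmin..Xmax} z2 t2) - measure F (S_set Td {Xmin..Xmax} z1 t1)
           \<le> G * (\<bar>t2 - t1\<bar> * (Xmax - Xmin) + Tmax * d)"
    by (rule S_diff_le[OF F z2 z1 t2 t1 d]) (use hd in \<open>auto simp: abs_minus_commute min.commute\<close>)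
  then show ?thesis using a by (simp add: abs_minus_commute)
qed

lemma cont_by_bound:
  fixes f h :: "real \<Rightarrow> real"
  assumes h: "continuous_on S h"
    and b: "\<And>x y. x \<in> S \<Longrightarrow> y \<in> S \<Longrightarrow> \<bar>f x - f y\<bar> \<le> K * (\<bar>x - y\<bar> + \<bar>h x - h y\<bar>)"
  shows "continuous_on S f"
  unfolding continuous_on_def
proof
  fix x assume x: "x \<in> S"
  have "((\<lambda>y. K * (\<bar>y - x\<bar> + \<bar>h y - h x\<bar>)) \<longlongrightarrow> K * (\<bar>x - x\<bar> + \<bar>h x - h x\<bar>)) (at x within S)"
    using h x unfolding continuous_on_def by (intro tendsto_intros) auto
  then have t0: "((\<lambda>y. K * (\<bar>y - x\<bar> + \<bar>h y - h x\<bar>)) \<longlongrightarrow> 0) (at x within S)" by simp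
  have ev: "eventually (\<lambda>y. norm (f y - f x) \<le> K * (\<bar>y - x\<bar> + \<bar>h y - h x\<bar>)) (at x within S)"
    unfolding eventually_at_filter using b x by (intro always_eventually) auto
  show "(f \<longlongrightarrow> f x) (at x within S)"
    by (rule LIM_zero_cancel, rule Lim_null_comparison[OF ev t0])
qed

lemma Phi_cont:
  assumes F: "good Td Xmin Xmax G F" and z: "continuous_on {0..Tmax} z"
  shows "continuous_on {0..Tmax} (Phi F z)"
proof (rule cont_by_bound[OF z])
  fix x y assume x: "x \<in> {0..Tmax}" and y: "y \<in> {0..Tmax}"
  let ?K = "LV * G * (Xmax - Xmin + Tmax)"
  have m: "\<bar>measure F (S_set Td {Xmin..Xmax} z x) - measure F (S_set Td {Xmin..Xmax} z y)\<bar>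
           \<le> G * (\<bar>x - y\<bar> * (Xmax - Xmin) + Tmax * \<bar>z x - z y\<bar>)"
    by (rule measure_diff_abs[OF F z z x y]) auto
  have "\<bar>Phi F z x - Phi F z y\<bar> \<le> LV * \<bar>measure F (S_set Td {Xmin..Xmax} z x) - measure F (S_set Td {Xmin..Xmax} z y)\<bar>"
    unfolding Phi_def by (rule V_diff) auto
  also have "\<dots> \<le> LV * (G * (\<bar>x - y\<bar> * (Xmax - Xmin) + Tmax * \<bar>z x - z y\<bar>))"
    using m LV_nonneg by (intro mult_left_mono) auto
  also have "\<dots> \<le> ?K * (\<bar>x - y\<bar> + \<bar>z x - z y\<bar>)"
  proof -
    have "\<bar>x - y\<bar> * (Xmax - Xmin) + Tmax * \<bar>z x - z y\<bar> \<le> (Xmax - Xmin + Tmax) * (\<bar>x - y\<bar> + \<bar>z x - z y\<bar>)"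
    proof -
      have "0 \<le> (Xmax - Xmin) * \<bar>z x - z y\<bar>" "0 \<le> Tmax * \<bar>x - y\<bar>" using Xlt Tpos by simp_all
      moreover have "(Xmax - Xmin + Tmax) * (\<bar>x - y\<bar> + \<bar>z x - z y\<bar>) = \<bar>x - y\<bar> * (Xmax - Xmin) + (Xmax - Xmin) * \<bar>z x - z y\<bar> + Tmax * \<bar>x - y\<bar> + Tmax * \<bar>z x - z y\<bar>"
        by (simp add: algebra_simps)
      ultimately show ?thesis by linarith
    qed
    then have "G * (\<bar>x - y\<bar> * (Xmax - Xmin) + Tmax * \<bar>z x - z y\<bar>) \<le> G * ((Xmax - Xmin + Tmax) * (\<bar>x - y\<bar> + \<bar>z x - z y\<bar>))"
      using Gpos by (intro mult_left_mono) auto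
    then show ?thesis using LV_nonneg by (simp add: mult_left_mono mult.assoc)
  qed
  finally show "\<bar>Phi F z x - Phi F z y\<bar> \<le> ?K * (\<bar>x - y\<bar> + \<bar>z x - z y\<bar>)" .
qed

lemma Phi_lip:
  assumes F: "good Td Xmin Xmax G F" and z1: "continuous_on {0..Tmax} z1" and z2: "continuous_on {0..Tmax} z2"
    and s: "s \<in> {0..Tmax}" and d: "\<And>\<tau>. \<tau> \<in> {0..s} \<Longrightarrow> \<bar>z1 \<tau> - z2 \<tau>\<bar> \<le> d"
  shows "\<bar>Phi F z1 s - Phi F z2 s\<bar> \<le> 2 * LV * G * Tmax * d"
proof -
  have d0: "0 \<le> d" using d[of 0] s by auto
  have m: "\<bar>measure F (S_set Td {Xmin..Xmax} z1 s) - measure F (S_set Td {Xmin..Xmax} z2 s)\<bar>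
           \<le> G * (\<bar>s - s\<bar> * (Xmax - Xmin) + Tmax * (2 * d))"
  proof (rule measure_diff_abs[OF F z1 z2 s s])
    fix \<tau> assume t: "\<tau> \<in> {0..min s s}"
    have "\<bar>(z1 s - z1 \<tau>) - (z2 s - z2 \<tau>)\<bar> \<le> \<bar>z1 s - z2 s\<bar> + \<bar>z1 \<tau> - z2 \<tau>\<bar>" by linarith
    also have "\<dots> \<le> 2 * d" using d[of s] d[of \<tau>] t s by auto
    finally show "\<bar>(z1 s - z1 \<tau>) - (z2 s - z2 \<tau>)\<bar> \<le> 2 * d" .
  qed (use d0 in auto)
  have "\<bar>Phi F z1 s - Phi F z2 s\<bar> \<le> LV * \<bar>measure F (S_set Td {Xmin..Xmax} z1 s) - measure F (S_set Td {Xmin..Xmax} z2 s)\<bar>"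
    unfolding Phi_def by (rule V_diff) auto
  also have "\<dots> \<le> LV * (G * (Tmax * (2 * d)))"
    using m LV_nonneg by (intro mult_left_mono) auto
  finally show ?thesis by (simp add: algebra_simps)
qed

definition lam :: real where "lam = 2 * (2 * LV * G * Tmax) + 1"

lemma lam_pos: "0 < lam"
proof -
  have "0 \<le> LV * G * Tmax" using LV_nonneg Gpos Tpos by simp
  then show ?thesis unfolding lam_def by simp
qed

lemma integral_bound_const:
  assumes h: "continuous_on {0..Tmax} h" and u: "u \<in> {0..Tmax}" and b: "\<And>s. s \<in> {0..u} \<Longrightarrow> \<bar>h s\<bar> \<le> B"
  shows "\<bar>integral {0..u} h\<bar> \<le> B * u"
proof -
  have hi: "h integrable_on {0..u}"
    using u by (intro integrable_continuous_interval continuous_on_subset[OF h]) auto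
  have "norm (integral {0..u} h) \<le> integral {0..u} (\<lambda>_. B)"
    by (rule Henstock_Kurzweil_Integration.integral_norm_bound_integral[OF hi]) (use b in auto)
  then show ?thesis using u by (simp add: mult.commute)
qed

definition Uraw :: "(real \<times> real) measure \<Rightarrow> (real \<Rightarrow>\<^sub>C real) \<Rightarrow> real \<Rightarrow> real" where
  "Uraw F f t = exp (- lam * clampT Tmax t) *
     integral {0..clampT Tmax t} (Phi F (\<lambda>s. exp (lam * s) * apply_bcontfun f s))"

definition Uop :: "(real \<times> real) measure \<Rightarrow> (real \<Rightarrow>\<^sub>C real) \<Rightarrow> (real \<Rightarrow>\<^sub>C real)" where
  "Uop F f = Bcontfun (Uraw F f)"

lemma w_cont: "continuous_on S (\<lambda>s. exp (lam * s) * apply_bcontfun f s)"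
  by (intro continuous_intros) auto

lemma Phi_abs_le: "\<bar>Phi F z s\<bar> \<le> Vmax"
  using Phi_bnd[of F z s] Vmin_pos by auto

lemma Uraw_bc:
  assumes F: "good Td Xmin Xmax G F"
  shows "Uraw F f \<in> bcontfun"
proof (rule bcontfun_normI)
  let ?h = "Phi F (\<lambda>s. exp (lam * s) * apply_bcontfun f s)"
  have hc: "continuous_on {0..Tmax} ?h" by (rule Phi_cont[OF F w_cont])
  have ic: "continuous_on {0..Tmax} (\<lambda>x. integral {0..x} ?h)"
    by (intro indefinite_integral_continuous_1 integrable_continuous_interval hc)
  have "continuous_on UNIV (\<lambda>t. integral {0..clampT Tmax t} ?h)"
    using cont_clampT[OF ic] Tpos by simp
  then show "continuous_on UNIV (Uraw F f)"
    unfolding Uraw_def by (intro continuous_intros continuous_on_compose2[OF clampT_cont]) auto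
  fix t
  have u: "clampT Tmax t \<in> {0..Tmax}" using clampT_in Tpos by simp
  have "\<bar>integral {0..clampT Tmax t} ?h\<bar> \<le> Vmax * clampT Tmax t"
    by (rule integral_bound_const[OF hc u]) (rule Phi_abs_le)
  also have "\<dots> \<le> Vmax * Tmax" using u Vmin_pos Vmin_le_Vmax by (intro mult_left_mono) auto
  finally have i: "\<bar>integral {0..clampT Tmax t} ?h\<bar> \<le> Vmax * Tmax" .
  have e: "exp (- lam * clampT Tmax t) \<le> 1" using u lam_pos by simp
  have "\<bar>Uraw F f t\<bar> \<le> 1 * (Vmax * Tmax)"
    unfolding Uraw_def abs_mult using i e by (intro mult_mono) auto
  then show "norm (Uraw F f t) \<le> Vmax * Tmax" by simp
qed

lemma Uop_apply: "good Td Xmin Xmax G F \<Longrightarrow> apply_bcontfun (Uop F f) t = Uraw F f t"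
  unfolding Uop_def using Uraw_bc by (simp add: Bcontfun_inverse)

lemma exp_has_int:
  assumes "0 \<le> u"
  shows "((\<lambda>s. exp (lam * s)) has_integral (exp (lam * u) - 1) / lam) {0..u}"
proof -
  have "((\<lambda>s. exp (lam * s)) has_integral (exp (lam * u) / lam - exp (lam * 0) / lam)) {0..u}"
  proof (rule fundamental_theorem_of_calculus[OF assms])
    fix x :: real
    have "((\<lambda>s. exp (lam * s) / lam) has_real_derivative (exp (lam * x) * (lam * 1) / lam)) (at x within {0..u})"
      using lam_pos by (intro derivative_eq_intros) auto
    then show "((\<lambda>s. exp (lam * s) / lam) has_vector_derivative exp (lam * x)) (at x within {0..u})"
      using lam_pos by (simp add: has_real_derivative_iff_has_vector_derivative)
  qed
  then show ?thesis by (simp add: diff_divide_distrib)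
qed

lemma Uop_contr:
  assumes F: "good Td Xmin Xmax G F"
  shows "dist (Uop F f1) (Uop F f2) \<le> 1/2 * dist f1 f2"
proof (rule dist_bound)
  fix t
  define u where "u = clampT Tmax t"
  define d where "d = dist f1 f2"
  define C where "C = 2 * LV * G * Tmax"
  define w1 where "w1 = (\<lambda>s. exp (lam * s) * apply_bcontfun f1 s)"
  define w2 where "w2 = (\<lambda>s. exp (lam * s) * apply_bcontfun f2 s)"
  have u: "u \<in> {0..Tmax}" unfolding u_def using clampT_in Tpos by simp
  have C0: "0 \<le> C" unfolding C_def using LV_nonneg Gpos Tpos by simp
  have d0: "0 \<le> d" unfolding d_def by simp
  have w1c: "continuous_on {0..Tmax} w1" and w2c: "continuous_on {0..Tmax} w2"
    unfolding w1_def w2_def by (rule w_cont)+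
  have h1: "continuous_on {0..Tmax} (Phi F w1)" and h2: "continuous_on {0..Tmax} (Phi F w2)"
    using Phi_cont[OF F] w1c w2c by auto
  have i1: "Phi F w1 integrable_on {0..u}" and i2: "Phi F w2 integrable_on {0..u}"
    using u by (intro integrable_continuous_interval continuous_on_subset[OF h1] continuous_on_subset[OF h2]; auto)+
  have pt: "\<bar>Phi F w1 s - Phi F w2 s\<bar> \<le> C * d * exp (lam * s)" if s: "s \<in> {0..u}" for s
  proof -
    have sT: "s \<in> {0..Tmax}" using s u by auto
    have "\<bar>Phi F w1 s - Phi F w2 s\<bar> \<le> 2 * LV * G * Tmax * (exp (lam * s) * d)"
    proof (rule Phi_lip[OF F w1c w2c sT])
      fix \<tau> assume \<tau>: "\<tau> \<in> {0..s}"
      have "\<bar>w1 \<tau> - w2 \<tau>\<bar> = exp (lam * \<tau>) * \<bar>apply_bcontfun f1 \<tau> - apply_bcontfun f2 \<tau>\<bar>"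
        unfolding w1_def w2_def by (simp add: abs_mult right_diff_distrib[symmetric])
      also have "\<dots> \<le> exp (lam * s) * d"
      proof (rule mult_mono)
        show "exp (lam * \<tau>) \<le> exp (lam * s)" using \<tau> lam_pos by (simp add: mult_left_mono)
        show "\<bar>apply_bcontfun f1 \<tau> - apply_bcontfun f2 \<tau>\<bar> \<le> d"
          using dist_bounded[of f1 \<tau> f2] unfolding d_def by (simp add: dist_real_def)
      qed auto
      finally show "\<bar>w1 \<tau> - w2 \<tau>\<bar> \<le> exp (lam * s) * d" .
    qed
    then show ?thesis unfolding C_def by (simp add: algebra_simps)
  qed
  have ei: "((\<lambda>s. C * d * exp (lam * s)) has_integral C * d * ((exp (lam * u) - 1) / lam)) {0..u}"
    using exp_has_int[of u] u by (intro has_integral_mult_right) auto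
  have "\<bar>integral {0..u} (Phi F w1) - integral {0..u} (Phi F w2)\<bar> = norm (integral {0..u} (\<lambda>s. Phi F w1 s - Phi F w2 s))"
    using integral_diff[OF i1 i2] by simp
  also have "\<dots> \<le> integral {0..u} (\<lambda>s. C * d * exp (lam * s))"
    by (rule Henstock_Kurzweil_Integration.integral_norm_bound_integral)
       (use i1 i2 ei pt in \<open>auto intro: integrable_diff\<close>)
  also have "\<dots> = C * d * ((exp (lam * u) - 1) / lam)" by (rule integral_unique[OF ei])
  finally have I: "\<bar>integral {0..u} (Phi F w1) - integral {0..u} (Phi F w2)\<bar> \<le> C * d * ((exp (lam * u) - 1) / lam)" .
  have "dist (apply_bcontfun (Uop F f1) t) (apply_bcontfun (Uop F f2) t)
      = exp (- lam * u) * \<bar>integral {0..u} (Phi F w1) - integral {0..u} (Phi F w2)\<bar>"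
    unfolding Uop_apply[OF F] Uraw_def dist_real_def u_def[symmetric] w1_def[symmetric] w2_def[symmetric]
    by (simp add: abs_mult right_diff_distrib[symmetric])
  also have "\<dots> \<le> exp (- lam * u) * (C * d * ((exp (lam * u) - 1) / lam))"
    using I by (intro mult_left_mono) auto
  also have "\<dots> = C * d * (1 - exp (- lam * u)) / lam"
    by (simp add: field_simps exp_minus)
  also have "\<dots> \<le> C * d / lam"
    using C0 d0 lam_pos by (intro divide_right_mono mult_left_le) auto
  also have "\<dots> \<le> 1/2 * d"
    using C0 d0 lam_pos unfolding lam_def C_def by (simp add: field_simps mult_right_mono)
  finally show "dist (apply_bcontfun (Uop F f1) t) (apply_bcontfun (Uop F f2) t) \<le> 1/2 * dist f1 f2"
    unfolding d_def .
qed

definition fixF :: "(real \<times> real) measure \<Rightarrow> (real \<Rightarrow>\<^sub>C real)" where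
  "fixF F = (THE f. Uop F f = f)"

lemma fix_ex1: "good Td Xmin Xmax G F \<Longrightarrow> \<exists>!f. Uop F f = f"
  by (rule banach_fix_type[of "1/2"]) (use Uop_contr in auto)

lemma fixF_eq: "good Td Xmin Xmax G F \<Longrightarrow> Uop F (fixF F) = fixF F"
  unfolding fixF_def by (rule theI'[OF fix_ex1])

lemma fixF_unique: "good Td Xmin Xmax G F \<Longrightarrow> Uop F f = f \<Longrightarrow> f = fixF F"
  unfolding fixF_def by (rule the1_equality[OF fix_ex1, symmetric])

definition zsol :: "(real \<times> real) measure \<Rightarrow> real \<Rightarrow> real" where
  "zsol F t = (if t \<in> {0..Tmax} then exp (lam * t) * apply_bcontfun (fixF F) t else 0)"

lemma zsol_cont: "continuous_on {0..Tmax} (zsol F)"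
proof -
  have "continuous_on {0..Tmax} (\<lambda>t. exp (lam * t) * apply_bcontfun (fixF F) t)" by (rule w_cont)
  then show ?thesis by (rule continuous_on_eq) (auto simp: zsol_def)
qed

lemma zsol_eqn:
  assumes F: "good Td Xmin Xmax G F" and t: "t \<in> {0..Tmax}"
  shows "zsol F t = integral {0..t} (Phi F (zsol F))"
proof -
  let ?w = "\<lambda>s. exp (lam * s) * apply_bcontfun (fixF F) s"
  have ct: "clampT Tmax t = t" using clampT_id t Tpos by simp
  have "apply_bcontfun (fixF F) t = Uraw F (fixF F) t"
    using fixF_eq[OF F] Uop_apply[OF F, of "fixF F" t] by simp
  also have "\<dots> = exp (- lam * t) * integral {0..t} (Phi F ?w)"
    unfolding Uraw_def ct ..
  also have "integral {0..t} (Phi F ?w) = integral {0..t} (Phi F (zsol F))"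
  proof (rule integral_cong)
    fix s assume s: "s \<in> {0..t}"
    show "Phi F ?w s = Phi F (zsol F) s"
      by (rule Phi_cong) (use s t in \<open>auto simp: zsol_def\<close>)
  qed
  finally have "apply_bcontfun (fixF F) t = exp (- lam * t) * integral {0..t} (Phi F (zsol F))" .
  then show ?thesis using t by (simp add: zsol_def exp_minus field_simps)
qed

lemma zsol_unique:
  assumes F: "good Td Xmin Xmax G F" and zc: "continuous_on {0..Tmax} z"
    and ze: "\<forall>t \<in> {0..Tmax}. z t = integral {0..t} (\<lambda>s. V (measure F (S_set Td {Xmin..Xmax} z s)))"
    and z0: "\<forall>t. t \<notin> {0..Tmax} \<longrightarrow> z t = 0"
  shows "z = zsol F"
proof -
  define g where "g = (\<lambda>t. exp (- lam * clampT Tmax t) * z (clampT Tmax t))"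
  have gc: "continuous_on UNIV g" unfolding g_def
    using cont_clampT[OF zc] Tpos by (intro continuous_intros continuous_on_compose2[OF clampT_cont]) auto
  obtain B where B: "\<And>t. t \<in> {0..Tmax} \<Longrightarrow> norm (z t) \<le> B"
    using compact_imp_bounded[OF compact_continuous_image[OF zc compact_Icc]]
    unfolding bounded_iff by (meson imageI)
  have gb: "g \<in> bcontfun"
  proof (rule bcontfun_normI[OF gc])
    fix t
    have u: "clampT Tmax t \<in> {0..Tmax}" using clampT_in Tpos by simp
    have "norm (g t) \<le> 1 * B" unfolding g_def norm_mult
      using B[OF u] u lam_pos by (intro mult_mono) auto
    then show "norm (g t) \<le> B" by simp
  qed
  define fz where "fz = Bcontfun g"
  have fz: "apply_bcontfun fz t = g t" for t unfolding fz_def using gb by (simp add: Bcontfun_inverse)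
  have wz: "exp (lam * s) * apply_bcontfun fz s = z s" if "s \<in> {0..Tmax}" for s
    using that Tpos by (simp add: fz g_def clampT_id exp_minus field_simps)
  have "Uop F fz = fz"
  proof (rule bcontfun_eqI)
    fix t
    define u where "u = clampT Tmax t"
    have u: "u \<in> {0..Tmax}" unfolding u_def using clampT_in Tpos by simp
    have "integral {0..u} (Phi F (\<lambda>s. exp (lam * s) * apply_bcontfun fz s)) = integral {0..u} (Phi F z)"
    proof (rule integral_cong)
      fix s assume s: "s \<in> {0..u}"
      show "Phi F (\<lambda>s. exp (lam * s) * apply_bcontfun fz s) s = Phi F z s"
        by (rule Phi_cong) (use s u wz in auto)
    qed
    also have "\<dots> = z u" using ze u unfolding Phi_def by auto
    finally show "apply_bcontfun (Uop F fz) t = apply_bcontfun fz t"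
      unfolding Uop_apply[OF F] Uraw_def u_def[symmetric] by (simp add: fz g_def u_def)
  qed
  then have "fz = fixF F" by (rule fixF_unique[OF F])
  then show ?thesis
  proof -
    assume e: "fz = fixF F"
    show ?thesis
    proof
      fix t show "z t = zsol F t"
        using wz[of t] z0 e by (auto simp: zsol_def)
    qed
  qed
qed

lemma zF_eq:
  assumes F: "good Td Xmin Xmax G F"
  shows "zF Tmax Td {Xmin..Xmax} V F = zsol F"
  unfolding zF_def
proof (rule the_equality)
  show "continuous_on {0..Tmax} (zsol F) \<and>
    (\<forall>t\<in>{0..Tmax}. zsol F t = integral {0..t} (\<lambda>s. V (measure F (S_set Td {Xmin..Xmax} (zsol F) s)))) \<and>
    (\<forall>t. t \<notin> {0..Tmax} \<longrightarrow> zsol F t = 0)"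
    using zsol_cont zsol_eqn[OF F] by (auto simp: zsol_def Phi_def[abs_def])
qed (use zsol_unique[OF F] in blast)

lemma zsol_incr:
  assumes F: "good Td Xmin Xmax G F" and ab: "0 \<le> a" "a \<le> b" "b \<le> Tmax"
  shows "Vmin * (b - a) \<le> zsol F b - zsol F a \<and> zsol F b - zsol F a \<le> Vmax * (b - a)"
proof -
  have hc: "continuous_on {0..Tmax} (Phi F (zsol F))" by (rule Phi_cont[OF F zsol_cont])
  have ib: "Phi F (zsol F) integrable_on {0..b}"
    using ab by (intro integrable_continuous_interval continuous_on_subset[OF hc]) auto
  have iab: "Phi F (zsol F) integrable_on {a..b}"
    using ab by (intro integrable_continuous_interval continuous_on_subset[OF hc]) auto
  have "zsol F b - zsol F a = integral {a..b} (Phi F (zsol F))"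
    using zsol_eqn[OF F, of a] zsol_eqn[OF F, of b] Henstock_Kurzweil_Integration.integral_combine[OF ab(1,2) ib] ab by auto
  moreover have "integral {a..b} (\<lambda>_. Vmin) \<le> integral {a..b} (Phi F (zsol F))"
    by (rule integral_le[OF _ iab]) (auto simp: Phi_bnd)
  moreover have "integral {a..b} (Phi F (zsol F)) \<le> integral {a..b} (\<lambda>_. Vmax)"
    by (rule integral_le[OF iab]) (auto simp: Phi_bnd)
  ultimately show ?thesis using ab by (simp add: mult.commute)
qed

lemma zsol_0: "good Td Xmin Xmax G F \<Longrightarrow> zsol F 0 = 0"
  using zsol_eqn[of F 0] Tpos by simp

lemma zsol_nonneg:
  assumes F: "good Td Xmin Xmax G F" and t: "t \<in> {0..Tmax}"
  shows "0 \<le> zsol F t"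
proof -
  have "Vmin * (t - 0) \<le> zsol F t - zsol F 0" using zsol_incr[OF F, of 0 t] t by auto
  moreover have "0 \<le> Vmin * (t - 0)" using Vmin_pos t by auto
  ultimately show ?thesis using zsol_0[OF F] by linarith
qed

lemma zsol_inj: "good Td Xmin Xmax G F \<Longrightarrow> inj_on (zsol F) {0..Tmax}"
proof (rule inj_onI)
  fix a b assume F: "good Td Xmin Xmax G F" and a: "a \<in> {0..Tmax}" and b: "b \<in> {0..Tmax}" and e: "zsol F a = zsol F b"
  show "a = b"
  proof (rule ccontr)
    assume "a \<noteq> b"
    then consider "a < b" | "b < a" by linarith
    then show False
    proof cases
      case 1
      have "Vmin * (b - a) \<le> zsol F b - zsol F a" using zsol_incr[OF F, of a b] a b 1 by auto
      moreover have "0 < Vmin * (b - a)" using 1 Vmin_pos by simp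
      ultimately show False using e by linarith
    next
      case 2
      have "Vmin * (a - b) \<le> zsol F a - zsol F b" using zsol_incr[OF F, of b a] a b 2 by auto
      moreover have "0 < Vmin * (a - b)" using 2 Vmin_pos by simp
      ultimately show False using e by linarith
    qed
  qed
qed

lemma zsol_lu:
  assumes F: "good Td Xmin Xmax G F" and a: "a \<in> {0..Tmax}" and b: "b \<in> {0..Tmax}"
  shows "Vmin * \<bar>a - b\<bar> \<le> \<bar>zsol F a - zsol F b\<bar> \<and> \<bar>zsol F a - zsol F b\<bar> \<le> Vmax * \<bar>a - b\<bar>"
proof (cases "a \<le> b")
  case True
  have "Vmin * (b - a) \<le> zsol F b - zsol F a \<and> zsol F b - zsol F a \<le> Vmax * (b - a)"
    using zsol_incr[OF F, of a b] a b True by auto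
  moreover have "0 \<le> Vmin * (b - a)" using True Vmin_pos by simp
  ultimately show ?thesis using True by (simp add: abs_minus_commute[of a b] abs_minus_commute[of "zsol F a"])
next
  case False
  have "Vmin * (a - b) \<le> zsol F a - zsol F b \<and> zsol F a - zsol F b \<le> Vmax * (a - b)"
    using zsol_incr[OF F, of b a] a b False by auto
  moreover have "0 \<le> Vmin * (a - b)" using False Vmin_pos by simp
  ultimately show ?thesis using False by simp
qed

lemma zsol_lower: "good Td Xmin Xmax G F \<Longrightarrow> a \<in> {0..Tmax} \<Longrightarrow> b \<in> {0..Tmax} \<Longrightarrow>
    Vmin * \<bar>a - b\<bar> \<le> \<bar>zsol F a - zsol F b\<bar>"
  using zsol_lu by blast

lemma zsol_upper: "good Td Xmin Xmax G F \<Longrightarrow> a \<in> {0..Tmax} \<Longrightarrow> b \<in> {0..Tmax} \<Longrightarrow>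
    \<bar>zsol F a - zsol F b\<bar> \<le> Vmax * \<bar>a - b\<bar>"
  using zsol_lu by blast

lemma zsol_image: "good Td Xmin Xmax G F \<Longrightarrow> 0 \<le> y \<Longrightarrow> y \<le> zsol F Tmax \<Longrightarrow> y \<in> zsol F ` {0..Tmax}"
  using IVT'[of "zsol F" 0 y Tmax] zsol_0[of F] zsol_cont[of F] Tpos by auto

definition zinv :: "(real \<times> real) measure \<Rightarrow> real \<Rightarrow> real" where
  "zinv F y = the_inv_into {0..Tmax} (zsol F) y"

lemma zinv_props:
  assumes F: "good Td Xmin Xmax G F" and y: "0 \<le> y" "y \<le> zsol F Tmax"
  shows "zinv F y \<in> {0..Tmax}" "zsol F (zinv F y) = y"
  using the_inv_into_into[OF zsol_inj[OF F] zsol_image[OF F y] subset_refl] f_the_inv_into_f[OF zsol_inj[OF F] zsol_image[OF F y]]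
  unfolding zinv_def by auto

lemma zinv_lip:
  assumes F: "good Td Xmin Xmax G F" and y1: "0 \<le> y1" "y1 \<le> zsol F Tmax" and y2: "0 \<le> y2" "y2 \<le> zsol F Tmax"
  shows "\<bar>zinv F y1 - zinv F y2\<bar> \<le> \<bar>y1 - y2\<bar> / Vmin"
proof -
  have "Vmin * \<bar>zinv F y1 - zinv F y2\<bar> \<le> \<bar>y1 - y2\<bar>"
    using zsol_lower[OF F zinv_props(1)[OF F y1] zinv_props(1)[OF F y2]] zinv_props(2)[OF F y1] zinv_props(2)[OF F y2]
    by simp
  then show ?thesis using Vmin_pos by (simp add: field_simps)
qed

lemma TF_eq: "good Td Xmin Xmax G F \<Longrightarrow> TF Tmax Td {Xmin..Xmax} V F td x = zinv F (x + zsol F td) - td"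
  unfolding TF_def zinv_def zF_eq by simp

end





lemma pos_part_lip: "\<bar>pos_part a - pos_part b\<bar> \<le> \<bar>a - b\<bar>"
  unfolding pos_part_def by (auto simp: max_def)

lemma J_bound:
  fixes \<alpha> \<beta> \<gamma> :: real
  assumes "0 \<le> \<alpha>" "0 \<le> \<beta>" "0 \<le> \<gamma>"
  shows "\<bar>(\<alpha> * T1 + \<beta> * pos_part (ta1 - td1 - T1) + \<gamma> * pos_part (td1 + T1 - ta1))
        - (\<alpha> * T2 + \<beta> * pos_part (ta2 - td2 - T2) + \<gamma> * pos_part (td2 + T2 - ta2))\<bar>
       \<le> (\<alpha> + \<beta> + \<gamma>) * \<bar>T1 - T2\<bar> + (\<beta> + \<gamma>) * (\<bar>td1 - td2\<bar> + \<bar>ta1 - ta2\<bar>)"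
proof -
  have p1: "\<bar>pos_part (ta1 - td1 - T1) - pos_part (ta2 - td2 - T2)\<bar> \<le> \<bar>T1 - T2\<bar> + (\<bar>td1 - td2\<bar> + \<bar>ta1 - ta2\<bar>)"
    using pos_part_lip[of "ta1 - td1 - T1" "ta2 - td2 - T2"] by linarith
  have p2: "\<bar>pos_part (td1 + T1 - ta1) - pos_part (td2 + T2 - ta2)\<bar> \<le> \<bar>T1 - T2\<bar> + (\<bar>td1 - td2\<bar> + \<bar>ta1 - ta2\<bar>)"
    using pos_part_lip[of "td1 + T1 - ta1" "td2 + T2 - ta2"] by linarith
  have "\<bar>(\<alpha> * T1 + \<beta> * pos_part (ta1 - td1 - T1) + \<gamma> * pos_part (td1 + T1 - ta1))
        - (\<alpha> * T2 + \<beta> * pos_part (ta2 - td2 - T2) + \<gamma> * pos_part (td2 + T2 - ta2))\<bar>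
     \<le> \<alpha> * \<bar>T1 - T2\<bar> + \<beta> * \<bar>pos_part (ta1 - td1 - T1) - pos_part (ta2 - td2 - T2)\<bar>
        + \<gamma> * \<bar>pos_part (td1 + T1 - ta1) - pos_part (td2 + T2 - ta2)\<bar>"
  proof -
    define A where "A = \<alpha> * (T1 - T2)"
    define P where "P = \<beta> * (pos_part (ta1 - td1 - T1) - pos_part (ta2 - td2 - T2))"
    define Q where "Q = \<gamma> * (pos_part (td1 + T1 - ta1) - pos_part (td2 + T2 - ta2))"
    have "(\<alpha> * T1 + \<beta> * pos_part (ta1 - td1 - T1) + \<gamma> * pos_part (td1 + T1 - ta1))
        - (\<alpha> * T2 + \<beta> * pos_part (ta2 - td2 - T2) + \<gamma> * pos_part (td2 + T2 - ta2)) = A + P + Q"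
      unfolding A_def P_def Q_def by (simp add: algebra_simps)
    moreover have "\<bar>A + P + Q\<bar> \<le> \<bar>A\<bar> + \<bar>P\<bar> + \<bar>Q\<bar>"
      using abs_triangle_ineq[of "A + P" Q] abs_triangle_ineq[of A P] by linarith
    moreover have "\<bar>A\<bar> = \<alpha> * \<bar>T1 - T2\<bar>" "\<bar>P\<bar> = \<beta> * \<bar>pos_part (ta1 - td1 - T1) - pos_part (ta2 - td2 - T2)\<bar>"
      "\<bar>Q\<bar> = \<gamma> * \<bar>pos_part (td1 + T1 - ta1) - pos_part (td2 + T2 - ta2)\<bar>"
      unfolding A_def P_def Q_def using assms by (simp_all add: abs_mult)
    ultimately show ?thesis by simp
  qed
  also have "\<dots> \<le> \<alpha> * \<bar>T1 - T2\<bar> + \<beta> * (\<bar>T1 - T2\<bar> + (\<bar>td1 - td2\<bar> + \<bar>ta1 - ta2\<bar>))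
        + \<gamma> * (\<bar>T1 - T2\<bar> + (\<bar>td1 - td2\<bar> + \<bar>ta1 - ta2\<bar>))"
    using p1 p2 assms by (intro add_mono mult_left_mono) auto
  also have "\<dots> = (\<alpha> + \<beta> + \<gamma>) * \<bar>T1 - T2\<bar> + (\<beta> + \<gamma>) * (\<bar>td1 - td2\<bar> + \<bar>ta1 - ta2\<bar>)"
    by (simp add: algebra_simps)
  finally show ?thesis .
qed

context zctx
begin

definition fapp :: "(real \<Rightarrow> real) \<Rightarrow> real \<Rightarrow> real \<Rightarrow> real \<times> real \<Rightarrow> real" where
  "fapp z s \<eta> p = max 0 (min 1 ((s - fst p) / \<eta> + 1)) *
     max 0 (min 1 ((snd p - (z s - z (clampT Tmax (fst p)))) / \<eta>))"

lemma fapp_cont: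
  assumes z: "continuous_on {0..Tmax} z" and eta: "0 < \<eta>"
  shows "continuous_on UNIV (fapp z s \<eta>)"
proof -
  have c: "continuous_on UNIV (\<lambda>t. z (clampT Tmax t))" using cont_clampT[OF z] Tpos by simp
  show ?thesis unfolding fapp_def
    using eta by (intro continuous_intros continuous_on_compose2[OF c]) auto
qed

lemma fapp_bnd: "0 \<le> fapp z s \<eta> p" "fapp z s \<eta> p \<le> 1"
  unfolding fapp_def by (auto intro!: mult_nonneg_nonneg mult_le_one)

lemma fapp_bounded: "bounded (range (fapp z s \<eta>))"
  unfolding bounded_iff using fapp_bnd by (intro exI[of _ 1]) auto

lemma good_space: "good Td Xmin Xmax G H \<Longrightarrow> space H = UNIV"
  unfolding good_def using sets_eq_imp_space_eq[of H borel] by auto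

lemma fapp_approx:
  assumes H: "good Td Xmin Xmax G H" and z: "continuous_on {0..Tmax} z" and s: "s \<in> {0..Tmax}"
    and eta: "0 < \<eta>"
  shows "\<bar>integral\<^sup>L H (fapp z s \<eta>) - measure H (S_set Td {Xmin..Xmax} z s)\<bar>
           \<le> G * ((Xmax - Xmin) + Tmax) * \<eta>"
proof -
  interpret prob_space H using H by (simp add: good_def)
  have sH: "sets H = sets borel" using H by (simp add: good_def)
  have spH: "space H = UNIV" by (rule good_space[OF H])
  define K where "K = Td \<times> {Xmin..Xmax}"
  define g where "g = (\<lambda>\<tau>. z s - z (clampT Tmax \<tau>))"
  have gc: "continuous_on UNIV g" unfolding g_def
    using cont_clampT[OF z] Tpos by (intro continuous_intros) auto
  define R where "R = {s..s+\<eta>} \<times> {Xmin..Xmax}"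
  define St where "St = {p::real\<times>real. fst p \<in> {0..Tmax} \<and> g (fst p) \<le> snd p \<and> snd p \<le> g (fst p) + \<eta>}"
  define S where "S = S_set Td {Xmin..Xmax} z s"
  define E where "E = ((R \<union> St) \<inter> K) \<union> (UNIV - K)"
  have Kb: "K \<in> sets borel" unfolding K_def using Tdc
    by (intro borel_closed closed_Times compact_imp_closed) auto
  have Rb: "R \<in> sets borel" unfolding R_def by (auto intro!: borel_closed closed_Times)
  have Stb: "St \<in> sets borel"
  proof -
    have "St = ({0..Tmax} \<times> UNIV) \<inter> {p. g (fst p) \<le> snd p} \<inter> {p. snd p \<le> g (fst p) + \<eta>}"
      unfolding St_def by auto
    moreover have "closed \<dots>"
      by (intro closed_Int closed_Times closed_Collect_le continuous_intros
        continuous_on_compose2[OF gc]) auto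
    ultimately show ?thesis by (simp add: borel_closed)
  qed
  have Sb: "S \<in> sets borel" unfolding S_def by (rule S_borel[OF z s])
  have Eb: "E \<in> sets borel" unfolding E_def using Kb Rb Stb by auto
  have Rm: "emeasure lborel R = ennreal (\<eta> * (Xmax - Xmin))"
    unfolding R_def using rect_emeasure[of s "s+\<eta>" Xmin Xmax] eta Xlt by simp
  have Stm: "emeasure lborel St = ennreal (Tmax * \<eta>)"
    unfolding St_def using strip_emeasure[OF gc, of 0 Tmax \<eta>] Tpos eta by simp
  have "emeasure lborel (R \<union> St) \<le> emeasure lborel R + emeasure lborel St"
    using Rb Stb by (intro emeasure_subadditive) auto
  also have "\<dots> = ennreal (\<eta> * (Xmax - Xmin)) + ennreal (Tmax * \<eta>)"
    using Rm Stm by simp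
  also have "\<dots> = ennreal (\<eta> * (Xmax - Xmin) + Tmax * \<eta>)"
    using Xlt Tpos eta by (intro ennreal_plus[symmetric]) auto
  finally have RSm: "emeasure lborel (R \<union> St) \<le> ennreal (\<eta> * (Xmax - Xmin) + Tmax * \<eta>)" .
  have m1: "measure H ((R \<union> St) \<inter> K) \<le> G * (\<eta> * (Xmax - Xmin) + Tmax * \<eta>)"
    by (rule good_measure_le[OF H _ _ _ _ RSm]) (use Kb Rb Stb Xlt Tpos eta in \<open>auto simp: K_def\<close>)
  have pK: "prob K = 1" using H by (simp add: good_def K_def emeasure_eq_measure)
  have m2: "measure H (UNIV - K) = 0" using prob_compl[of K] pK Kb sH spH by simp
  have mE: "measure H E \<le> G * (\<eta> * (Xmax - Xmin) + Tmax * \<eta>)"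
  proof -
    have "measure H E \<le> measure H ((R \<union> St) \<inter> K) + measure H (UNIV - K)"
      unfolding E_def using Kb Rb Stb sH by (intro measure_Un_le) auto
    then show ?thesis using m1 m2 by simp
  qed
  have pw: "indicator S p - indicator E p \<le> fapp z s \<eta> p \<and> fapp z s \<eta> p \<le> indicator S p + indicator E p" for p
  proof (cases "p \<in> E")
    case True
    then show ?thesis using fapp_bnd[of z s \<eta> p] by (auto simp: indicator_def)
  next
    case False
    obtain \<tau> \<xi> where pe: "p = (\<tau>, \<xi>)" by (cases p)
    have pK: "p \<in> K" and pD: "p \<notin> R" "p \<notin> St" using False by (auto simp: E_def)
    have tau: "\<tau> \<in> Td" "\<tau> \<in> {0..Tmax}" and xi: "\<xi> \<in> {Xmin..Xmax}"
      using pK pe TdT by (auto simp: K_def)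
    have gt: "g \<tau> = z s - z \<tau>" unfolding g_def using clampT_id[OF _ tau(2)] Tpos by simp
    have tcase: "\<tau> < s \<or> s + \<eta> < \<tau>" using pD(1) pe xi by (auto simp: R_def)
    have xcase: "\<xi> < g \<tau> \<or> g \<tau> + \<eta> < \<xi>" using pD(2) pe tau by (auto simp: St_def)
    have "fapp z s \<eta> p = indicator S p"
    proof (cases "\<tau> < s")
      case True
      have f1: "max 0 (min 1 ((s - \<tau>) / \<eta> + 1)) = (1::real)"
        using True eta by (simp add: field_simps)
      show ?thesis
      proof (cases "\<xi> < g \<tau>")
        case True2: True
        have "(\<xi> - g \<tau>) / \<eta> < 0" using True2 eta by (simp add: divide_less_0_iff)
        then have "max 0 (min 1 ((\<xi> - g \<tau>) / \<eta>)) = (0::real)" by simp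
        moreover have "p \<notin> S" using True2 gt pe by (auto simp: S_def S_set_def)
        ultimately show ?thesis using pe f1 by (simp add: fapp_def g_def)
      next
        case False2: False
        then have x2: "g \<tau> + \<eta> < \<xi>" using xcase by simp
        have "1 < (\<xi> - g \<tau>) / \<eta>" using x2 eta by (simp add: pos_less_divide_eq)
        then have "max 0 (min 1 ((\<xi> - g \<tau>) / \<eta>)) = (1::real)" by simp
        moreover have "p \<in> S" using x2 gt pe True tau xi eta by (auto simp: S_def S_set_def)
        ultimately show ?thesis using pe f1 by (simp add: fapp_def g_def)
      qed
    next
      case False
      then have t2: "s + \<eta> < \<tau>" using tcase by simp
      have "(s - \<tau>) / \<eta> < -1" using t2 eta by (simp add: pos_divide_less_eq)
      then have "max 0 (min 1 ((s - \<tau>) / \<eta> + 1)) = (0::real)" by simp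
      moreover have "p \<notin> S" using t2 pe eta by (auto simp: S_def S_set_def)
      ultimately show ?thesis using pe by (simp add: fapp_def)
    qed
    then show ?thesis by simp
  qed
  have meas: "f \<in> borel_measurable H" if "continuous_on UNIV f" for f :: "real \<times> real \<Rightarrow> real"
    using borel_measurable_continuous_onI[OF that] measurable_cong_sets[OF sH refl] by blast
  have fi: "integrable H (fapp z s \<eta>)"
    by (rule integrable_const_bound[where B=1]) (use fapp_bnd meas[OF fapp_cont[OF z eta]] in auto)
  have iS: "integrable H (indicator S :: _ \<Rightarrow> real)"
    by (rule integrable_const_bound[where B=1]) (use Sb sH in auto)
  have iE: "integrable H (indicator E :: _ \<Rightarrow> real)"
    by (rule integrable_const_bound[where B=1]) (use Eb sH in auto)
  have intS: "integral\<^sup>L H (indicator S) = measure H S" using spH by simp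
  have intE: "integral\<^sup>L H (indicator E) = measure H E" using spH by simp
  have "integral\<^sup>L H (\<lambda>p. indicator S p - indicator E p) \<le> integral\<^sup>L H (fapp z s \<eta>)"
    by (rule integral_mono) (use iS iE fi pw in auto)
  moreover have "integral\<^sup>L H (fapp z s \<eta>) \<le> integral\<^sup>L H (\<lambda>p. indicator S p + indicator E p)"
    by (rule integral_mono) (use iS iE fi pw in auto)
  ultimately have "measure H S - measure H E \<le> integral\<^sup>L H (fapp z s \<eta>)"
    "integral\<^sup>L H (fapp z s \<eta>) \<le> measure H S + measure H E"
    using Bochner_Integration.integral_diff[OF iS iE] Bochner_Integration.integral_add[OF iS iE] intS intE by auto
  then have "\<bar>integral\<^sup>L H (fapp z s \<eta>) - measure H S\<bar> \<le> measure H E" by auto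
  also have "\<dots> \<le> G * ((Xmax - Xmin) + Tmax) * \<eta>" using mE by (simp add: algebra_simps)
  finally show ?thesis unfolding S_def .
qed

lemma tendsto_by_bound:
  fixes u b :: "nat \<Rightarrow> real"
  assumes "\<And>n. \<bar>u n - l\<bar> \<le> b n" "b \<longlonglongrightarrow> 0"
  shows "u \<longlonglongrightarrow> l"
  by (rule LIM_zero_cancel, rule Lim_null_comparison[of _ b]) (use assms in \<open>auto intro: always_eventually\<close>)

lemma conv_meas:
  assumes Fs: "\<And>n. good Td Xmin Xmax G (Fs n)" and F: "good Td Xmin Xmax G F"
    and wc: "weak_conv2 Fs F" and z: "continuous_on {0..Tmax} z" and s: "s \<in> {0..Tmax}"
  shows "(\<lambda>n. measure (Fs n) (S_set Td {Xmin..Xmax} z s)) \<longlonglongrightarrow> measure F (S_set Td {Xmin..Xmax} z s)"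
proof (rule LIMSEQ_I)
  fix e :: real assume e: "0 < e"
  define c where "c = G * ((Xmax - Xmin) + Tmax)"
  have c: "0 < c" unfolding c_def using Gpos Xlt Tpos by simp
  define \<eta> where "\<eta> = e / (4 * c)"
  have eta: "0 < \<eta>" unfolding \<eta>_def using e c by simp
  have ce: "c * \<eta> = e / 4" unfolding \<eta>_def using c by simp
  have "(\<lambda>n. integral\<^sup>L (Fs n) (fapp z s \<eta>)) \<longlonglongrightarrow> integral\<^sup>L F (fapp z s \<eta>)"
    using wc fapp_cont[OF z eta] fapp_bounded unfolding weak_conv2_def by blast
  then obtain N where N: "\<And>n. n \<ge> N \<Longrightarrow> norm (integral\<^sup>L (Fs n) (fapp z s \<eta>) - integral\<^sup>L F (fapp z s \<eta>)) < e / 4"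
    using LIMSEQ_D[of _ _ "e/4"] e by (metis zero_less_divide_iff zero_less_numeral)
  show "\<exists>N. \<forall>n\<ge>N. norm (measure (Fs n) (S_set Td {Xmin..Xmax} z s) - measure F (S_set Td {Xmin..Xmax} z s)) < e"
  proof (intro exI allI impI)
    fix n assume n: "N \<le> n"
    have a1: "\<bar>integral\<^sup>L (Fs n) (fapp z s \<eta>) - measure (Fs n) (S_set Td {Xmin..Xmax} z s)\<bar> \<le> e / 4"
      using fapp_approx[OF Fs z s eta] ce unfolding c_def by simp
    have a2: "\<bar>integral\<^sup>L F (fapp z s \<eta>) - measure F (S_set Td {Xmin..Xmax} z s)\<bar> \<le> e / 4"
      using fapp_approx[OF F z s eta] ce unfolding c_def by simp
    have a3: "\<bar>integral\<^sup>L (Fs n) (fapp z s \<eta>) - integral\<^sup>L F (fapp z s \<eta>)\<bar> < e / 4"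
      using N[OF n] by simp
    show "norm (measure (Fs n) (S_set Td {Xmin..Xmax} z s) - measure F (S_set Td {Xmin..Xmax} z s)) < e"
      using a1 a2 a3 e by (simp only: real_norm_def)
  qed
qed

lemma conv_Phi:
  assumes Fs: "\<And>n. good Td Xmin Xmax G (Fs n)" and F: "good Td Xmin Xmax G F"
    and wc: "weak_conv2 Fs F" and z: "continuous_on {0..Tmax} z" and s: "s \<in> {0..Tmax}"
  shows "(\<lambda>n. Phi (Fs n) z s) \<longlonglongrightarrow> Phi F z s"
proof (rule tendsto_by_bound)
  let ?a = "\<lambda>n. measure (Fs n) (S_set Td {Xmin..Xmax} z s)"
  let ?b = "measure F (S_set Td {Xmin..Xmax} z s)"
  show "\<bar>Phi (Fs n) z s - Phi F z s\<bar> \<le> LV * \<bar>?a n - ?b\<bar>" for n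
    unfolding Phi_def by (rule V_diff) auto
  have "(\<lambda>n. LV * \<bar>?a n - ?b\<bar>) \<longlonglongrightarrow> LV * \<bar>?b - ?b\<bar>"
    by (intro tendsto_intros conv_meas[OF Fs F wc z s])
  then show "(\<lambda>n. LV * \<bar>?a n - ?b\<bar>) \<longlonglongrightarrow> 0" by simp
qed

lemma Uop_diff:
  assumes F1: "good Td Xmin Xmax G F1" and F2: "good Td Xmin Xmax G F2"
  shows "dist (Uop F1 f) (Uop F2 f) \<le>
    integral {0..Tmax} (\<lambda>s. \<bar>Phi F1 (\<lambda>s. exp (lam * s) * apply_bcontfun f s) s - Phi F2 (\<lambda>s. exp (lam * s) * apply_bcontfun f s) s\<bar>)"
proof (rule dist_bound)
  fix t
  define w where "w = (\<lambda>s. exp (lam * s) * apply_bcontfun f s)"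
  define u where "u = clampT Tmax t"
  have u: "u \<in> {0..Tmax}" unfolding u_def using clampT_in Tpos by simp
  have wc: "continuous_on {0..Tmax} w" unfolding w_def by (rule w_cont)
  have h1: "continuous_on {0..Tmax} (Phi F1 w)" and h2: "continuous_on {0..Tmax} (Phi F2 w)"
    using Phi_cont[OF F1 wc] Phi_cont[OF F2 wc] .
  have hd: "continuous_on {0..Tmax} (\<lambda>s. \<bar>Phi F1 w s - Phi F2 w s\<bar>)"
    by (intro continuous_intros h1 h2)
  have i1: "Phi F1 w integrable_on {0..u}" and i2: "Phi F2 w integrable_on {0..u}"
    using u by (intro integrable_continuous_interval continuous_on_subset[OF h1] continuous_on_subset[OF h2]; auto)+
  have idu: "(\<lambda>s. \<bar>Phi F1 w s - Phi F2 w s\<bar>) integrable_on {0..u}"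
    using u by (intro integrable_continuous_interval continuous_on_subset[OF hd]) auto
  have idT: "(\<lambda>s. \<bar>Phi F1 w s - Phi F2 w s\<bar>) integrable_on {0..Tmax}"
    by (intro integrable_continuous_interval hd)
  have "\<bar>integral {0..u} (Phi F1 w) - integral {0..u} (Phi F2 w)\<bar> = norm (integral {0..u} (\<lambda>s. Phi F1 w s - Phi F2 w s))"
    using integral_diff[OF i1 i2] by simp
  also have "\<dots> \<le> integral {0..u} (\<lambda>s. \<bar>Phi F1 w s - Phi F2 w s\<bar>)"
    by (rule Henstock_Kurzweil_Integration.integral_norm_bound_integral)
       (use i1 i2 idu in \<open>auto intro: integrable_diff\<close>)
  also have "\<dots> \<le> integral {0..Tmax} (\<lambda>s. \<bar>Phi F1 w s - Phi F2 w s\<bar>)"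
    by (rule integral_subset_le[OF _ idu idT]) (use u in auto)
  finally have I: "\<bar>integral {0..u} (Phi F1 w) - integral {0..u} (Phi F2 w)\<bar> \<le> integral {0..Tmax} (\<lambda>s. \<bar>Phi F1 w s - Phi F2 w s\<bar>)" .
  have e1: "exp (- lam * u) \<le> 1" using u lam_pos by simp
  have "dist (apply_bcontfun (Uop F1 f) t) (apply_bcontfun (Uop F2 f) t)
      = exp (- lam * u) * \<bar>integral {0..u} (Phi F1 w) - integral {0..u} (Phi F2 w)\<bar>"
    unfolding Uop_apply[OF F1] Uop_apply[OF F2] Uraw_def dist_real_def u_def[symmetric] w_def[symmetric]
    by (simp add: abs_mult right_diff_distrib[symmetric])
  also have "\<dots> \<le> 1 * integral {0..Tmax} (\<lambda>s. \<bar>Phi F1 w s - Phi F2 w s\<bar>)"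
    using I e1 by (intro mult_mono) auto
  finally show "dist (apply_bcontfun (Uop F1 f) t) (apply_bcontfun (Uop F2 f) t) \<le>
    integral {0..Tmax} (\<lambda>s. \<bar>Phi F1 (\<lambda>s. exp (lam * s) * apply_bcontfun f s) s - Phi F2 (\<lambda>s. exp (lam * s) * apply_bcontfun f s) s\<bar>)"
    unfolding w_def by simp
qed

lemma fix_diff:
  assumes F1: "good Td Xmin Xmax G F1" and F2: "good Td Xmin Xmax G F2"
  shows "dist (fixF F1) (fixF F2) \<le> 2 * dist (Uop F1 (fixF F2)) (Uop F2 (fixF F2))"
proof -
  have "dist (fixF F1) (fixF F2) = dist (Uop F1 (fixF F1)) (Uop F2 (fixF F2))"
    using fixF_eq[OF F1] fixF_eq[OF F2] by simp
  also have "\<dots> \<le> dist (Uop F1 (fixF F1)) (Uop F1 (fixF F2)) + dist (Uop F1 (fixF F2)) (Uop F2 (fixF F2))"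
    by (rule dist_triangle)
  also have "\<dots> \<le> 1/2 * dist (fixF F1) (fixF F2) + dist (Uop F1 (fixF F2)) (Uop F2 (fixF F2))"
    using Uop_contr[OF F1] by simp
  finally show ?thesis by simp
qed

lemma fix_conv:
  assumes Fs: "\<And>n. good Td Xmin Xmax G (Fs n)" and F: "good Td Xmin Xmax G F" and wc: "weak_conv2 Fs F"
  shows "(\<lambda>n. dist (fixF (Fs n)) (fixF F)) \<longlonglongrightarrow> 0"
proof (rule tendsto_by_bound)
  define w where "w = (\<lambda>s. exp (lam * s) * apply_bcontfun (fixF F) s)"
  have wc': "continuous_on {0..Tmax} w" unfolding w_def by (rule w_cont)
  define e where "e = (\<lambda>n. integral {0..Tmax} (\<lambda>s. \<bar>Phi (Fs n) w s - Phi F w s\<bar>))"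
  show "\<bar>dist (fixF (Fs n)) (fixF F) - 0\<bar> \<le> 2 * e n" for n
    using fix_diff[OF Fs F, of n] Uop_diff[OF Fs F, of n "fixF F"] unfolding e_def w_def by simp
  have "(\<lambda>n. integral {0..Tmax} (\<lambda>s. \<bar>Phi (Fs n) w s - Phi F w s\<bar>)) \<longlonglongrightarrow> integral {0..Tmax} (\<lambda>s. 0::real)"
  proof (rule dominated_convergence(2))
    fix k
    show "(\<lambda>s. \<bar>Phi (Fs k) w s - Phi F w s\<bar>) integrable_on {0..Tmax}"
      by (intro integrable_continuous_interval continuous_intros Phi_cont[OF Fs wc'] Phi_cont[OF F wc'])
  next
    show "(\<lambda>_. 2 * Vmax) integrable_on {0..Tmax}" by (intro integrable_continuous_interval continuous_intros)
  next
    fix k x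
    show "norm \<bar>Phi (Fs k) w x - Phi F w x\<bar> \<le> 2 * Vmax"
      using Phi_abs_le[of "Fs k" w x] Phi_abs_le[of F w x] by simp
  next
    fix x assume x: "x \<in> {0..Tmax}"
    have "(\<lambda>k. \<bar>Phi (Fs k) w x - Phi F w x\<bar>) \<longlonglongrightarrow> \<bar>Phi F w x - Phi F w x\<bar>"
      by (intro tendsto_intros conv_Phi[OF Fs F wc wc' x])
    then show "(\<lambda>k. \<bar>Phi (Fs k) w x - Phi F w x\<bar>) \<longlonglongrightarrow> 0" by simp
  qed
  then have "e \<longlonglongrightarrow> 0" unfolding e_def by simp
  then show "(\<lambda>n. 2 * e n) \<longlonglongrightarrow> 0" using tendsto_mult_right_zero by blast
qed

lemma zsol_unif:
  assumes F1: "good Td Xmin Xmax G F1" and t: "t \<in> {0..Tmax}"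
  shows "\<bar>zsol F1 t - zsol F2 t\<bar> \<le> exp (lam * Tmax) * dist (fixF F1) (fixF F2)"
proof -
  have "\<bar>zsol F1 t - zsol F2 t\<bar> = exp (lam * t) * \<bar>apply_bcontfun (fixF F1) t - apply_bcontfun (fixF F2) t\<bar>"
    using t by (simp add: zsol_def abs_mult right_diff_distrib[symmetric])
  also have "\<dots> \<le> exp (lam * Tmax) * dist (fixF F1) (fixF F2)"
  proof (rule mult_mono)
    show "exp (lam * t) \<le> exp (lam * Tmax)" using t lam_pos by (simp add: mult_left_mono)
    show "\<bar>apply_bcontfun (fixF F1) t - apply_bcontfun (fixF F2) t\<bar> \<le> dist (fixF F1) (fixF F2)"
      using dist_bounded[of "fixF F1" t "fixF F2"] by (simp add: dist_real_def)
  qed auto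
  finally show ?thesis .
qed

lemma y_range:
  assumes F: "good Td Xmin Xmax G F" and wd: "\<And>td x. td \<in> Td \<Longrightarrow> x \<in> {Xmin..Xmax} \<Longrightarrow> x + zsol F td \<le> zsol F Tmax"
    and td: "td \<in> Td" and x: "x \<in> {Xmin..Xmax}"
  shows "0 \<le> x + zsol F td" "x + zsol F td \<le> zsol F Tmax"
proof -
  have "0 \<le> zsol F td" using zsol_nonneg[OF F] td TdT by auto
  then show "0 \<le> x + zsol F td" using x X0 by auto
  show "x + zsol F td \<le> zsol F Tmax" by (rule wd[OF td x])
qed

lemma TF_lip_pt:
  assumes F: "good Td Xmin Xmax G F" and wd: "\<And>td x. td \<in> Td \<Longrightarrow> x \<in> {Xmin..Xmax} \<Longrightarrow> x + zsol F td \<le> zsol F Tmax"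
    and td1: "td1 \<in> Td" and x1: "x1 \<in> {Xmin..Xmax}" and td2: "td2 \<in> Td" and x2: "x2 \<in> {Xmin..Xmax}"
  shows "\<bar>(zinv F (x1 + zsol F td1) - td1) - (zinv F (x2 + zsol F td2) - td2)\<bar>
          \<le> (\<bar>x1 - x2\<bar> + Vmax * \<bar>td1 - td2\<bar>) / Vmin + \<bar>td1 - td2\<bar>"
proof -
  have i: "\<bar>zinv F (x1 + zsol F td1) - zinv F (x2 + zsol F td2)\<bar> \<le> \<bar>(x1 + zsol F td1) - (x2 + zsol F td2)\<bar> / Vmin"
    by (rule zinv_lip[OF F y_range[OF F wd td1 x1] y_range[OF F wd td2 x2]])
  have "\<bar>zsol F td1 - zsol F td2\<bar> \<le> Vmax * \<bar>td1 - td2\<bar>"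
  proof -
    have "td1 \<in> {0..Tmax}" "td2 \<in> {0..Tmax}" using TdT td1 td2 by blast+
    then show ?thesis by (rule zsol_upper[OF F])
  qed
  then have "\<bar>(x1 + zsol F td1) - (x2 + zsol F td2)\<bar> \<le> \<bar>x1 - x2\<bar> + Vmax * \<bar>td1 - td2\<bar>"
    by linarith
  then have "\<bar>(x1 + zsol F td1) - (x2 + zsol F td2)\<bar> / Vmin \<le> (\<bar>x1 - x2\<bar> + Vmax * \<bar>td1 - td2\<bar>) / Vmin"
    using Vmin_pos by (intro divide_right_mono) auto
  then show ?thesis using i by linarith
qed

lemma main_lip:
  fixes \<alpha> \<beta> \<gamma> :: real and Ta :: "real set"
  assumes F: "good Td Xmin Xmax G F" and wd: "\<And>td x. td \<in> Td \<Longrightarrow> x \<in> {Xmin..Xmax} \<Longrightarrow> x + zsol F td \<le> zsol F Tmax"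
    and co: "0 \<le> \<alpha>" "0 \<le> \<beta>" "0 \<le> \<gamma>"
  shows "((\<alpha> + \<beta> + \<gamma>) * ((1 + Vmax) / Vmin + 1) + 2 * (\<beta> + \<gamma>))-lipschitz_on (Td \<times> {Xmin..Xmax} \<times> Ta)
            (\<lambda>(td, x, ta). Jcost \<alpha> \<beta> \<gamma> Tmax Td {Xmin..Xmax} V td x ta F)"
proof (rule lipschitz_onI)
  show "0 \<le> (\<alpha> + \<beta> + \<gamma>) * ((1 + Vmax) / Vmin + 1) + 2 * (\<beta> + \<gamma>)"
    using co Vmin_pos Vmin_le_Vmax by simp
  fix p q assume p: "p \<in> Td \<times> {Xmin..Xmax} \<times> Ta" and q: "q \<in> Td \<times> {Xmin..Xmax} \<times> Ta"
  obtain td1 x1 ta1 where pe: "p = (td1, x1, ta1)" by (cases p) auto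
  obtain td2 x2 ta2 where qe: "q = (td2, x2, ta2)" by (cases q) auto
  define d where "d = dist p q"
  have dtd: "\<bar>td1 - td2\<bar> \<le> d" using dist_fst_le[of p q] unfolding d_def pe qe by (simp add: dist_real_def)
  have dx: "\<bar>x1 - x2\<bar> \<le> d"
    using dist_fst_le[of "snd p" "snd q"] dist_snd_le[of p q] unfolding d_def pe qe by (simp add: dist_real_def)
  have dta: "\<bar>ta1 - ta2\<bar> \<le> d"
    using dist_snd_le[of "snd p" "snd q"] dist_snd_le[of p q] unfolding d_def pe qe by (simp add: dist_real_def)
  have mem: "td1 \<in> Td" "x1 \<in> {Xmin..Xmax}" "td2 \<in> Td" "x2 \<in> {Xmin..Xmax}" using p q pe qe by auto
  define T1 where "T1 = zinv F (x1 + zsol F td1) - td1"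
  define T2 where "T2 = zinv F (x2 + zsol F td2) - td2"
  have "\<bar>T1 - T2\<bar> \<le> (\<bar>x1 - x2\<bar> + Vmax * \<bar>td1 - td2\<bar>) / Vmin + \<bar>td1 - td2\<bar>"
    unfolding T1_def T2_def by (rule TF_lip_pt[OF F wd mem])
  also have "\<dots> \<le> (d + Vmax * d) / Vmin + d"
    using dx dtd Vmin_pos Vmin_le_Vmax
    by (intro add_mono divide_right_mono mult_left_mono) auto
  also have "\<dots> = ((1 + Vmax) / Vmin + 1) * d" by (simp add: field_simps)
  finally have dT: "\<bar>T1 - T2\<bar> \<le> ((1 + Vmax) / Vmin + 1) * d" .
  have "dist ((\<lambda>(td, x, ta). Jcost \<alpha> \<beta> \<gamma> Tmax Td {Xmin..Xmax} V td x ta F) p)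
             ((\<lambda>(td, x, ta). Jcost \<alpha> \<beta> \<gamma> Tmax Td {Xmin..Xmax} V td x ta F) q)
      = \<bar>(\<alpha> * T1 + \<beta> * pos_part (ta1 - td1 - T1) + \<gamma> * pos_part (td1 + T1 - ta1))
        - (\<alpha> * T2 + \<beta> * pos_part (ta2 - td2 - T2) + \<gamma> * pos_part (td2 + T2 - ta2))\<bar>"
    unfolding pe qe Jcost_def TF_eq[OF F] T1_def T2_def dist_real_def by simp
  also have "\<dots> \<le> (\<alpha> + \<beta> + \<gamma>) * \<bar>T1 - T2\<bar> + (\<beta> + \<gamma>) * (\<bar>td1 - td2\<bar> + \<bar>ta1 - ta2\<bar>)"
    by (rule J_bound[OF co])
  also have "\<dots> \<le> (\<alpha> + \<beta> + \<gamma>) * (((1 + Vmax) / Vmin + 1) * d) + (\<beta> + \<gamma>) * (d + d)"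
    using dT dtd dta co by (intro add_mono mult_left_mono) auto
  also have "\<dots> = ((\<alpha> + \<beta> + \<gamma>) * ((1 + Vmax) / Vmin + 1) + 2 * (\<beta> + \<gamma>)) * dist p q"
    unfolding d_def by (simp add: algebra_simps)
  finally show "dist ((\<lambda>(td, x, ta). Jcost \<alpha> \<beta> \<gamma> Tmax Td {Xmin..Xmax} V td x ta F) p)
             ((\<lambda>(td, x, ta). Jcost \<alpha> \<beta> \<gamma> Tmax Td {Xmin..Xmax} V td x ta F) q)
     \<le> ((\<alpha> + \<beta> + \<gamma>) * ((1 + Vmax) / Vmin + 1) + 2 * (\<beta> + \<gamma>)) * dist p q" .
qed

lemma main_cont:
  fixes \<alpha> \<beta> \<gamma> :: real
  assumes Fs: "\<And>n. good Td Xmin Xmax G (Fs n)" and F: "good Td Xmin Xmax G F"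
    and wdn: "\<And>n td x. td \<in> Td \<Longrightarrow> x \<in> {Xmin..Xmax} \<Longrightarrow> x + zsol (Fs n) td \<le> zsol (Fs n) Tmax"
    and wd0: "\<And>td x. td \<in> Td \<Longrightarrow> x \<in> {Xmin..Xmax} \<Longrightarrow> x + zsol F td \<le> zsol F Tmax"
    and tds: "\<And>n. tds n \<in> Td" and xs: "\<And>n. xs n \<in> {Xmin..Xmax}" and td: "td \<in> Td" and x: "x \<in> {Xmin..Xmax}"
    and ctd: "tds \<longlonglongrightarrow> td" and cx: "xs \<longlonglongrightarrow> x" and cta: "tas \<longlonglongrightarrow> ta" and wc: "weak_conv2 Fs F"
    and co: "0 \<le> \<alpha>" "0 \<le> \<beta>" "0 \<le> \<gamma>"
  shows "(\<lambda>n. Jcost \<alpha> \<beta> \<gamma> Tmax Td {Xmin..Xmax} V (tds n) (xs n) (tas n) (Fs n))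
           \<longlonglongrightarrow> Jcost \<alpha> \<beta> \<gamma> Tmax Td {Xmin..Xmax} V td x ta F"
proof -
  define \<rho> where "\<rho> = (\<lambda>n. exp (lam * Tmax) * dist (fixF (Fs n)) (fixF F))"
  have \<rho>0: "\<rho> \<longlonglongrightarrow> 0" unfolding \<rho>_def by (rule tendsto_mult_right_zero[OF fix_conv[OF Fs F wc]])
  have \<rho>b: "\<bar>zsol (Fs n) t - zsol F t\<bar> \<le> \<rho> n" if "t \<in> {0..Tmax}" for n t
    unfolding \<rho>_def by (rule zsol_unif[OF Fs that])
  define y where "y = (\<lambda>n. xs n + zsol (Fs n) (tds n))"
  define y0 where "y0 = x + zsol F td"
  define a where "a = (\<lambda>n. zinv (Fs n) (y n))"
  define a0 where "a0 = zinv F y0"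
  have yr: "0 \<le> y n" "y n \<le> zsol (Fs n) Tmax" for n
    unfolding y_def using y_range[OF Fs[of n] wdn[where n=n] tds[of n] xs[of n]] by auto
  have y0r: "0 \<le> y0" "y0 \<le> zsol F Tmax"
    unfolding y0_def using y_range[OF F wd0 td x] by auto
  have an: "a n \<in> {0..Tmax}" "zsol (Fs n) (a n) = y n" for n
    unfolding a_def using zinv_props[OF Fs yr] by auto
  have a0p: "a0 \<in> {0..Tmax}" "zsol F a0 = y0"
    unfolding a0_def using zinv_props[OF F y0r] by auto
  have tdT: "td \<in> {0..Tmax}" using td TdT by blast
  have tdsT: "\<And>n. tds n \<in> {0..Tmax}" using tds TdT by blast
  have zc: "(\<lambda>n. zsol F (tds n)) \<longlonglongrightarrow> zsol F td"
    by (rule continuous_on_tendsto_compose[OF zsol_cont ctd tdT]) (use tdsT in auto)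
  define b where "b = (\<lambda>n. (2 * \<rho> n + \<bar>xs n - x\<bar> + \<bar>zsol F (tds n) - zsol F td\<bar>) / Vmin)"
  have ab: "\<bar>a n - a0\<bar> \<le> b n" for n
  proof -
    have l: "Vmin * \<bar>a n - a0\<bar> \<le> \<bar>zsol F (a n) - zsol F a0\<bar>"
      by (rule zsol_lower[OF F an(1) a0p(1)])
    have r1: "\<bar>zsol (Fs n) (a n) - zsol F (a n)\<bar> \<le> \<rho> n" by (rule \<rho>b[OF an(1)])
    have r2: "\<bar>zsol (Fs n) (tds n) - zsol F (tds n)\<bar> \<le> \<rho> n" by (rule \<rho>b[OF tdsT])
    have "\<bar>zsol F (a n) - zsol F a0\<bar> \<le> 2 * \<rho> n + \<bar>xs n - x\<bar> + \<bar>zsol F (tds n) - zsol F td\<bar>"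
      using r1 r2 an(2)[of n] a0p(2) unfolding y_def y0_def by linarith
    then have "Vmin * \<bar>a n - a0\<bar> \<le> 2 * \<rho> n + \<bar>xs n - x\<bar> + \<bar>zsol F (tds n) - zsol F td\<bar>"
      using l by linarith
    then show ?thesis unfolding b_def using Vmin_pos by (simp add: field_simps)
  qed
  have "b \<longlonglongrightarrow> (2 * 0 + \<bar>x - x\<bar> + \<bar>zsol F td - zsol F td\<bar>) / Vmin"
    unfolding b_def using Vmin_pos by (intro tendsto_intros \<rho>0 cx zc) auto
  then have b0: "b \<longlonglongrightarrow> 0" by simp
  have ca: "a \<longlonglongrightarrow> a0" by (rule tendsto_by_bound[OF ab b0])
  define T where "T = (\<lambda>n. a n - tds n)"
  define T0 where "T0 = a0 - td"
  have cT: "T \<longlonglongrightarrow> T0" unfolding T_def T0_def by (intro tendsto_intros ca ctd)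
  have Jn: "Jcost \<alpha> \<beta> \<gamma> Tmax Td {Xmin..Xmax} V (tds n) (xs n) (tas n) (Fs n)
      = \<alpha> * T n + \<beta> * pos_part (tas n - tds n - T n) + \<gamma> * pos_part (tds n + T n - tas n)" for n
    unfolding Jcost_def TF_eq[OF Fs] T_def a_def y_def by simp
  have J0: "Jcost \<alpha> \<beta> \<gamma> Tmax Td {Xmin..Xmax} V td x ta F
      = \<alpha> * T0 + \<beta> * pos_part (ta - td - T0) + \<gamma> * pos_part (td + T0 - ta)"
    unfolding Jcost_def TF_eq[OF F] T0_def a0_def y0_def by simp
  show ?thesis unfolding Jn J0
  proof (rule tendsto_by_bound)
    show "\<bar>(\<alpha> * T n + \<beta> * pos_part (tas n - tds n - T n) + \<gamma> * pos_part (tds n + T n - tas n))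
        - (\<alpha> * T0 + \<beta> * pos_part (ta - td - T0) + \<gamma> * pos_part (td + T0 - ta))\<bar>
       \<le> (\<alpha> + \<beta> + \<gamma>) * \<bar>T n - T0\<bar> + (\<beta> + \<gamma>) * (\<bar>tds n - td\<bar> + \<bar>tas n - ta\<bar>)" for n
      by (rule J_bound[OF co])
    have "(\<lambda>n. (\<alpha> + \<beta> + \<gamma>) * \<bar>T n - T0\<bar> + (\<beta> + \<gamma>) * (\<bar>tds n - td\<bar> + \<bar>tas n - ta\<bar>))
       \<longlonglongrightarrow> (\<alpha> + \<beta> + \<gamma>) * \<bar>T0 - T0\<bar> + (\<beta> + \<gamma>) * (\<bar>td - td\<bar> + \<bar>ta - ta\<bar>)"
      by (intro tendsto_intros cT ctd cta)
    then show "(\<lambda>n. (\<alpha> + \<beta> + \<gamma>) * \<bar>T n - T0\<bar> + (\<beta> + \<gamma>) * (\<bar>tds n - td\<bar> + \<bar>tas n - ta\<bar>)) \<longlonglongrightarrow> 0"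
      by simp
  qed
qed

end



theorem proposition5:
  fixes Tmax Xmin Xmax G \<alpha> \<beta> \<gamma> Vmin Vmax :: real
    and Td Ta :: "real set"
    and m :: "(real \<times> real) measure"
    and V :: "real \<Rightarrow> real"
  assumes Tmax_pos: "0 < Tmax"
    and Td: "compact Td" "Td \<subseteq> {0..Tmax}"
    and Ta: "compact Ta" "Ta \<subseteq> {0..Tmax}"
    and X: "0 \<le> Xmin" "Xmin < Xmax"
    and m: "prob_space m" "sets m = sets borel" "emeasure m ({Xmin..Xmax} \<times> Ta) = 1"
    and G: "0 < G"
    and coeffs: "0 < \<alpha>" "0 < \<beta>" "0 < \<gamma>"
    and V_dec: "\<And>a b. 0 \<le> a \<Longrightarrow> a < b \<Longrightarrow> V b < V a"
    and V_lip: "\<exists>L. L-lipschitz_on {0..} V"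
    and V_bnd: "0 < Vmin" "Vmin < Vmax" "\<And>u. 0 \<le> u \<Longrightarrow> Vmin \<le> V u \<and> V u \<le> Vmax"
    and wd: "\<And>F td x. F \<in> P_mG Td {Xmin..Xmax} Ta m G \<Longrightarrow> td \<in> Td \<Longrightarrow> x \<in> {Xmin..Xmax} \<Longrightarrow>
              x + zF Tmax Td {Xmin..Xmax} V F td \<le> zF Tmax Td {Xmin..Xmax} V F Tmax"
  shows
    "(\<forall>tds xs tas Fs td x ta F.
        (\<forall>n. tds n \<in> Td \<and> xs n \<in> {Xmin..Xmax} \<and> tas n \<in> Ta \<and> Fs n \<in> P_mG Td {Xmin..Xmax} Ta m G)
        \<and> td \<in> Td \<and> x \<in> {Xmin..Xmax} \<and> ta \<in> Ta \<and> F \<in> P_mG Td {Xmin..Xmax} Ta m G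
        \<and> tds \<longlonglongrightarrow> td \<and> xs \<longlonglongrightarrow> x \<and> tas \<longlonglongrightarrow> ta \<and> weak_conv2 Fs F
        \<longrightarrow> (\<lambda>n. Jcost \<alpha> \<beta> \<gamma> Tmax Td {Xmin..Xmax} V (tds n) (xs n) (tas n) (Fs n))
              \<longlonglongrightarrow> Jcost \<alpha> \<beta> \<gamma> Tmax Td {Xmin..Xmax} V td x ta F)
     \<and> (\<forall>F \<in> P_mG Td {Xmin..Xmax} Ta m G. \<exists>L.
          L-lipschitz_on (Td \<times> {Xmin..Xmax} \<times> Ta)
            (\<lambda>(td, x, ta). Jcost \<alpha> \<beta> \<gamma> Tmax Td {Xmin..Xmax} V td x ta F))"
proof -
  obtain L where L: "L-lipschitz_on {0..} V" using V_lip by blast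
  interpret Z: zctx Tmax Td Xmin Xmax G V Vmin Vmax L
    by unfold_locales (use Tmax_pos Td X G L V_bnd in auto)
  have PG: "good Td Xmin Xmax G F" if "F \<in> P_mG Td {Xmin..Xmax} Ta m G" for F
    using that unfolding P_mG_def good_def by auto
  have wdz: "x + Z.zsol F td \<le> Z.zsol F Tmax"
    if "F \<in> P_mG Td {Xmin..Xmax} Ta m G" "td \<in> Td" "x \<in> {Xmin..Xmax}" for F td x
    using wd[OF that] Z.zF_eq[OF PG[OF that(1)]] by simp
  show ?thesis
  proof (intro conjI allI impI ballI)
    fix tds xs tas Fs td x ta F
    assume H: "(\<forall>n. tds n \<in> Td \<and> xs n \<in> {Xmin..Xmax} \<and> tas n \<in> Ta \<and> Fs n \<in> P_mG Td {Xmin..Xmax} Ta m G)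
        \<and> td \<in> Td \<and> x \<in> {Xmin..Xmax} \<and> ta \<in> Ta \<and> F \<in> P_mG Td {Xmin..Xmax} Ta m G
        \<and> tds \<longlonglongrightarrow> td \<and> xs \<longlonglongrightarrow> x \<and> tas \<longlonglongrightarrow> ta \<and> weak_conv2 Fs F"
    show "(\<lambda>n. Jcost \<alpha> \<beta> \<gamma> Tmax Td {Xmin..Xmax} V (tds n) (xs n) (tas n) (Fs n))
              \<longlonglongrightarrow> Jcost \<alpha> \<beta> \<gamma> Tmax Td {Xmin..Xmax} V td x ta F"
    proof (rule Z.main_cont)
      show "\<And>n. good Td Xmin Xmax G (Fs n)" using H PG by blast
      show "good Td Xmin Xmax G F" using H PG by blast
      show "\<And>n td x. td \<in> Td \<Longrightarrow> x \<in> {Xmin..Xmax} \<Longrightarrow> x + Z.zsol (Fs n) td \<le> Z.zsol (Fs n) Tmax"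
        using H wdz by blast
      show "\<And>td' x'. td' \<in> Td \<Longrightarrow> x' \<in> {Xmin..Xmax} \<Longrightarrow> x' + Z.zsol F td' \<le> Z.zsol F Tmax"
        using H wdz by blast
    qed (use H coeffs in auto)
  next
    fix F assume F: "F \<in> P_mG Td {Xmin..Xmax} Ta m G"
    show "\<exists>L. L-lipschitz_on (Td \<times> {Xmin..Xmax} \<times> Ta)
            (\<lambda>(td, x, ta). Jcost \<alpha> \<beta> \<gamma> Tmax Td {Xmin..Xmax} V td x ta F)"
      by (rule exI, rule Z.main_lip[OF PG[OF F]]) (use wdz[OF F] coeffs in auto)
  qed
qed

end
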